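(* For a partition $\lambda=(\lambda_1,\dots,\lambda_r)$ of length $r\le n$, the factorial Hall–Littlewood $P$-polynomial $HP_\lambda(x_1,\dots,x_n;t|\mathbf b)$ is the coefficient of $u_1^{-\lambda_1}\cdots u_r^{-\lambda_r}$ in $$\frac1{(1-t)^r}\prod_{i=1}^r\Big(\prod_{j=1}^n\frac{u_i-tx_j}{u_i-x_j}\prod_{j=1}^{i-1}\frac{u_i-u_j}{u_i-tu_j}-t^{n-i+1}\Big)\times\prod_{i=1}^r\prod_{k=1}^{\lambda_i}\frac{u_i+b_k}{u_i}.$$
   Context: $x_1,\dots,x_n$, $t$, $\mathbf b=(b_1,b_2,\dots)$ are indeterminates. The factorial Hall–Littlewood $P$-polynomial (the specialization of the universal one to the additive formal group law $F(u,v)=u+v$) is, for $\lambda$ of length $r\le n$, $$HP_\lambda(x_1,\dots,x_n;t|\mathbf b):=\sum_{\bar w\in S_n/(S_1)^r\times S_{n-r}}w\cdot\Big[\prod_{i=1}^r\prod_{k=1}^{\lambda_i}(x_i+b_k)\prod_{i=1}^r\prod_{j=i+1}^n\frac{x_i-tx_j}{x_i-x_j}\Big],$$ $S_n$ permuting only the $x$'s, sum over coset representatives. Expansion convention: $1/(u_i-x_j)$ is expanded in powers of $x_j$, and for $j<i$, $1/(u_i-tu_j)$ is expanded in powers of $u_j$ with coefficients Laurent in $u_i$. *)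

theory Defs
  imports "HOL-Combinatorics.Permutations"
begin

text \<open>Variables are 1-based: x 1, ..., x n; b 1, b 2, ...; lam 1, ..., lam r.
  The indeterminates are specialised to elements of an arbitrary field
  (with x 1..x n pairwise distinct and t not 1, so that all denominators are defined).
  The permutation w acts by w(f(x 1,...,x n)) = f(x (w 1), ..., x (w n)).\<close>

definition HP_summand ::
  "nat \<Rightarrow> nat \<Rightarrow> (nat \<Rightarrow> nat) \<Rightarrow> (nat \<Rightarrow> 'a::field) \<Rightarrow> 'a \<Rightarrow> (nat \<Rightarrow> 'a) \<Rightarrow> 'a" where
  "HP_summand n r lam y t b =
     (\<Prod>i=1..r. \<Prod>k=1..lam i. (y i + b k)) *
     (\<Prod>i=1..r. \<Prod>j=i+1..n. (y i - t * y j) / (y i - y j))"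

definition young_sub :: "nat \<Rightarrow> nat \<Rightarrow> (nat \<Rightarrow> nat) set" where
  "young_sub n r = {h. h permutes {1..n} \<and> (\<forall>i\<in>{1..r}. h i = i)}"

definition cosets_Sn :: "nat \<Rightarrow> nat \<Rightarrow> (nat \<Rightarrow> nat) set set" where
  "cosets_Sn n r = (\<lambda>w. (\<lambda>h. w \<circ> h) ` young_sub n r) ` {w. w permutes {1..n}}"

definition HP ::
  "nat \<Rightarrow> nat \<Rightarrow> (nat \<Rightarrow> nat) \<Rightarrow> (nat \<Rightarrow> 'a::field) \<Rightarrow> 'a \<Rightarrow> (nat \<Rightarrow> 'a) \<Rightarrow> 'a" where
  "HP n r lam x t b =
     (\<Sum>C\<in>cosets_Sn n r. HP_summand n r lam (x \<circ> (SOME w. w \<in> C)) t b)"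

text \<open>A series is its coefficient function on exponent vectors e :: nat => int
  (the coefficient of the monomial prod_l u_l^(e l)).  Multiplication is the Cauchy
  product; for the series occurring below (supported on exponent vectors vanishing
  outside {1..r} with bounded-above suffix sums) all these sums are finite.\<close>

type_synonym 'a lser = "(nat \<Rightarrow> int) \<Rightarrow> 'a"

definition lmono :: "(nat \<Rightarrow> int) \<Rightarrow> 'a::comm_ring_1 lser" where
  "lmono d = (\<lambda>e. if e = d then 1 else 0)"

definition lconst :: "'a::comm_ring_1 \<Rightarrow> 'a lser" where
  "lconst c = (\<lambda>e. if e = (\<lambda>_. 0) then c else 0)"

definition ladd :: "'a::comm_ring_1 lser \<Rightarrow> 'a lser \<Rightarrow> 'a lser" where
  "ladd f g = (\<lambda>e. f e + g e)"

definition lsub :: "'a::comm_ring_1 lser \<Rightarrow> 'a lser \<Rightarrow> 'a lser" where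
  "lsub f g = (\<lambda>e. f e - g e)"

definition lscale :: "'a::comm_ring_1 \<Rightarrow> 'a lser \<Rightarrow> 'a lser" where
  "lscale c f = (\<lambda>e. c * f e)"

definition lmult :: "'a::comm_ring_1 lser \<Rightarrow> 'a lser \<Rightarrow> 'a lser" where
  "lmult f g = (\<lambda>e. \<Sum>a\<in>{a. f a \<noteq> 0 \<and> g (\<lambda>l. e l - a l) \<noteq> 0}. f a * g (\<lambda>l. e l - a l))"

definition lprod :: "(nat \<Rightarrow> 'a::comm_ring_1 lser) \<Rightarrow> nat list \<Rightarrow> 'a lser" where
  "lprod F is = foldr (\<lambda>i acc. lmult (F i) acc) is (lconst 1)"

definition uvec :: "nat \<Rightarrow> nat \<Rightarrow> int" where
  "uvec i = (\<lambda>l. if l = i then 1 else 0)"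

definition uvar :: "nat \<Rightarrow> 'a::comm_ring_1 lser" where
  "uvar i = lmono (uvec i)"

text \<open>1/(u^alpha - c u^beta), expanded in powers of the second term:
  sum over m >= 0 of c^m u^(m beta - (m+1) alpha).\<close>
definition lgeom :: "(nat \<Rightarrow> int) \<Rightarrow> 'a::comm_ring_1 \<Rightarrow> (nat \<Rightarrow> int) \<Rightarrow> 'a lser" where
  "lgeom alpha c beta =
     (\<lambda>e. \<Sum>m\<in>{m::nat. e = (\<lambda>l. int m * beta l - (int m + 1) * alpha l)}. c ^ m)"

text \<open>The generating series of the theorem:
  1/(1-t)^r prod_i ( prod_j (u_i - t x_j)/(u_i - x_j) prod_(j<i) (u_i-u_j)/(u_i-t u_j) - t^(n-i+1) )
  * prod_i prod_(k=1..lam i) (u_i + b_k)/u_i,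
  with 1/(u_i - x_j) expanded in powers of x_j and 1/(u_i - t u_j) (j<i) in powers of u_j.\<close>
definition HP_genser ::
  "nat \<Rightarrow> nat \<Rightarrow> (nat \<Rightarrow> nat) \<Rightarrow> (nat \<Rightarrow> 'a::field) \<Rightarrow> 'a \<Rightarrow> (nat \<Rightarrow> 'a) \<Rightarrow> 'a lser" where
  "HP_genser n r lam x t b =
     lscale (1 / (1 - t) ^ r)
       (lmult
         (lprod (\<lambda>i.
             lsub
               (lmult
                 (lprod (\<lambda>j. lmult (lsub (uvar i) (lconst (t * x j)))
                                     (lgeom (uvec i) (x j) (\<lambda>_. 0))) [1..<n+1])
                 (lprod (\<lambda>j. lmult (lsub (uvar i) (uvar j))
                                     (lgeom (uvec i) t (uvec j))) [1..<i]))
               (lconst (t ^ (n - i + 1)))) [1..<r+1])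
         (lprod (\<lambda>i. lprod (\<lambda>k. lmult (ladd (uvar i) (lconst (b k)))
                                        (lmono (\<lambda>l. - uvec i l))) [1..<lam i + 1]) [1..<r+1]))"

end

theory Submission
  imports Defs "HOL-Library.Groups_Big_Fun"
begin


definition ss :: "nat \<Rightarrow> nat \<Rightarrow> (nat \<Rightarrow> int) \<Rightarrow> int" where
  "ss N k e = (\<Sum>l=k..N. e l)"

definition supp_ok :: "nat \<Rightarrow> (nat \<Rightarrow> int) \<Rightarrow> bool" where
  "supp_ok N e \<longleftrightarrow> e 0 = 0 \<and> (\<forall>l>N. e l = 0)"

definition goodb :: "nat \<Rightarrow> int \<Rightarrow> ('a::zero) lser \<Rightarrow> bool" where
  "goodb N C f \<longleftrightarrow> (\<forall>e. f e \<noteq> 0 \<longrightarrow> supp_ok N e \<and> (\<forall>k\<in>{1..N}. ss N k e \<le> C))"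

definition good :: "('a::zero) lser \<Rightarrow> bool" where
  "good f \<longleftrightarrow> (\<exists>N C. goodb N C f)"

definition box :: "nat \<Rightarrow> int \<Rightarrow> int \<Rightarrow> (nat \<Rightarrow> int) set" where
  "box N lo hi = {a. supp_ok N a \<and> (\<forall>k\<in>{1..N}. lo \<le> ss N k a \<and> ss N k a \<le> hi)}"

lemma ss_Suc: "k \<le> N \<Longrightarrow> ss N k a = a k + ss N (Suc k) a"
  unfolding ss_def by (simp add: sum.atLeast_Suc_atMost)

lemma ss_empty: "N < k \<Longrightarrow> ss N k a = 0"
  unfolding ss_def by simp

lemma ss_add: "ss N k (\<lambda>l. a l + b l) = ss N k a + ss N k b"
  unfolding ss_def by (simp add: sum.distrib)

lemma ss_diff: "ss N k (\<lambda>l. a l - b l) = ss N k a - ss N k b"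
  unfolding ss_def by (simp add: sum_subtractf)

lemma finite_box: "finite (box N lo hi)"
proof -
  let ?h = "\<lambda>a. restrict (\<lambda>k. ss N k a) {1..N}"
  have "inj_on ?h (box N lo hi)"
  proof (rule inj_onI)
    fix a b assume a: "a \<in> box N lo hi" and b: "b \<in> box N lo hi" and eq: "?h a = ?h b"
    have E: "ss N k a = ss N k b" if "k \<in> {1..N}" for k
      using fun_cong[OF eq, of k] that by simp
    have E2: "ss N (Suc k) a = ss N (Suc k) b" if "k \<in> {1..N}" for k
    proof (cases "Suc k \<le> N")
      case True then show ?thesis using E[of "Suc k"] by simp
    next
      case False then show ?thesis by (simp add: ss_empty)
    qed
    show "a = b"
    proof
      fix l
      show "a l = b l"
      proof (cases "l \<in> {1..N}")
        case True
        then show ?thesis using ss_Suc[of l N a] ss_Suc[of l N b] E[OF True] E2[OF True] by auto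
      next
        case False
        then have "l = 0 \<or> l > N" by auto
        then show ?thesis using a b by (auto simp: box_def supp_ok_def)
      qed
    qed
  qed
  moreover have "?h ` box N lo hi \<subseteq> PiE {1..N} (\<lambda>_. {lo..hi})"
    by (auto simp: box_def)
  ultimately show ?thesis
    by (meson finite_PiE finite_atLeastAtMost finite_atLeastAtMost_int inj_on_finite)
qed

lemma goodb_mono: "goodb N C f \<Longrightarrow> N \<le> N' \<Longrightarrow> C \<le> C' \<Longrightarrow> 0 \<le> C' \<Longrightarrow> goodb N' C' f"
  unfolding goodb_def
proof (intro allI impI conjI ballI)
  fix e assume H: "\<forall>e. f e \<noteq> 0 \<longrightarrow> supp_ok N e \<and> (\<forall>k\<in>{1..N}. ss N k e \<le> C)"
    and "N \<le> N'" "C \<le> C'" "0 \<le> C'" and fe: "f e \<noteq> 0"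
  then have s: "supp_ok N e" and b: "\<forall>k\<in>{1..N}. ss N k e \<le> C" by auto
  show "supp_ok N' e" using s \<open>N \<le> N'\<close> by (auto simp: supp_ok_def)
  have eqs: "ss N' k e = ss N k e" for k
  proof -
    have "(\<Sum>l=k..N'. e l) = (\<Sum>l=k..N. e l)"
      by (rule sum.mono_neutral_right) (use s \<open>N \<le> N'\<close> in \<open>auto simp: supp_ok_def\<close>)
    then show ?thesis by (simp add: ss_def)
  qed
  fix k assume "k \<in> {1..N'}"
  show "ss N' k e \<le> C'"
  proof (cases "k \<le> N")
    case True then show ?thesis using b \<open>k \<in> {1..N'}\<close> eqs \<open>C \<le> C'\<close> by force
  next
    case False then show ?thesis using eqs ss_empty[of N k e] \<open>0 \<le> C'\<close> by simp
  qed
qed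

lemma good_goodb: "good f \<Longrightarrow> \<exists>C\<ge>0. goodb N C f \<or> True"
  by auto

lemma good_common:
  assumes "good f" "good g"
  obtains N C where "goodb N C f" "goodb N C g" "0 \<le> C"
proof -
  obtain N1 C1 N2 C2 where 1: "goodb N1 C1 f" and 2: "goodb N2 C2 g"
    using assms by (auto simp: good_def)
  show ?thesis
    apply (rule that[of "max N1 N2" "max 0 (max C1 C2)"])
    using goodb_mono[OF 1, of "max N1 N2" "max 0 (max C1 C2)"]
      goodb_mono[OF 2, of "max N1 N2" "max 0 (max C1 C2)"] by auto
qed

lemma ss_supp_ok_add: "supp_ok N a \<Longrightarrow> supp_ok N b \<Longrightarrow> supp_ok N (\<lambda>l. a l + b l)"
  by (auto simp: supp_ok_def)

lemma supp_ok_diff: "supp_ok N a \<Longrightarrow> supp_ok N b \<Longrightarrow> supp_ok N (\<lambda>l. a l - b l)"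
  by (auto simp: supp_ok_def)

lemma mult_terms_box:
  assumes f: "goodb N C1 f" and g: "goodb N C2 g" and fa: "f a \<noteq> 0" and ga: "g (\<lambda>l. e l - a l) \<noteq> 0"
  shows "a \<in> box N (- C2 - (\<Sum>k=1..N. \<bar>ss N k e\<bar>)) C1" and "supp_ok N e"
proof -
  have sa: "supp_ok N a" and ba: "\<forall>k\<in>{1..N}. ss N k a \<le> C1" using f fa by (auto simp: goodb_def)
  have sb: "supp_ok N (\<lambda>l. e l - a l)" and bb: "\<forall>k\<in>{1..N}. ss N k (\<lambda>l. e l - a l) \<le> C2"
    using g ga by (auto simp: goodb_def)
  have "e = (\<lambda>l. a l + (e l - a l))" by simp
  then show se: "supp_ok N e" using ss_supp_ok_add[OF sa sb] by metis
  have "lo \<le> ss N k a" if "k \<in> {1..N}" and "lo = - C2 - (\<Sum>k=1..N. \<bar>ss N k e\<bar>)" for k lo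
  proof -
    have "\<bar>ss N k e\<bar> \<le> (\<Sum>k=1..N. \<bar>ss N k e\<bar>)"
      by (rule member_le_sum) (use that in auto)
    moreover have "ss N k e - ss N k a \<le> C2" using bb that(1) ss_diff[of N k e a] by fastforce
    ultimately show ?thesis using that(2) by linarith
  qed
  then show "a \<in> box N (- C2 - (\<Sum>k=1..N. \<bar>ss N k e\<bar>)) C1"
    using sa ba by (auto simp: box_def)
qed

lemma lmult_finite:
  assumes f: "goodb N C1 f" and g: "goodb N C2 g"
  shows "finite {a. f a \<noteq> 0 \<and> g (\<lambda>l. e l - a l) \<noteq> 0}"
  by (rule finite_subset[OF _ finite_box]) (use mult_terms_box(1)[OF f g] in blast)

lemma lmult_goodb:
  assumes f: "goodb N C1 f" and g: "goodb N C2 g"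
  shows "goodb N (C1 + C2) (lmult f g)"
  unfolding goodb_def
proof (intro allI impI)
  fix e assume ne: "lmult f g e \<noteq> 0"
  have "{a. f a \<noteq> 0 \<and> g (\<lambda>l. e l - a l) \<noteq> 0} \<noteq> {}"
    using ne unfolding lmult_def by (metis sum.empty)
  then obtain a where fa: "f a \<noteq> 0" and ga: "g (\<lambda>l. e l - a l) \<noteq> 0" by blast
  have se: "supp_ok N e" using mult_terms_box(2)[OF f g fa ga] .
  have ba: "\<forall>k\<in>{1..N}. ss N k a \<le> C1" using f fa by (auto simp: goodb_def)
  have bb: "\<forall>k\<in>{1..N}. ss N k (\<lambda>l. e l - a l) \<le> C2" using g ga by (auto simp: goodb_def)
  show "supp_ok N e \<and> (\<forall>k\<in>{1..N}. ss N k e \<le> C1 + C2)"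
  proof (intro conjI ballI se)
    fix k assume k: "k \<in> {1..N}"
    have "ss N k (\<lambda>l. e l - a l) = ss N k e - ss N k a" by (rule ss_diff)
    then show "ss N k e \<le> C1 + C2" using ba bb k by fastforce
  qed
qed

lemma good_lmult: "good f \<Longrightarrow> good g \<Longrightarrow> good (lmult f g)"
  by (metis good_common good_def lmult_goodb)

lemma lmult_Sum_any:
  assumes "good f" "good g"
  shows "lmult f g e = (\<Sum>a. f a * g (\<lambda>l. e l - a l))"
proof -
  obtain N C where f: "goodb N C f" and g: "goodb N C g" using good_common[OF assms] by blast
  show ?thesis unfolding lmult_def
    by (rule Sum_any.expand_superset[symmetric]) (use lmult_finite[OF f g, of e] in auto)
qed


lemma goodbD: "goodb N C f \<Longrightarrow> f a \<noteq> 0 \<Longrightarrow> supp_ok N a \<and> (\<forall>k\<in>{1..N}. ss N k a \<le> C)"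
  by (auto simp: goodb_def)

lemma good_zero: "good (\<lambda>_. 0)" by (auto simp: good_def goodb_def)

lemma good_lconst: "good (lconst c)"
  unfolding good_def goodb_def lconst_def
  by (rule exI[of _ 0], rule exI[of _ 0]) (auto simp: supp_ok_def ss_def)

lemma goodb_ladd: "goodb N C f \<Longrightarrow> goodb N C g \<Longrightarrow> goodb N C (ladd f g)"
  unfolding goodb_def ladd_def by (metis add.right_neutral add_0)

lemma good_ladd: "good f \<Longrightarrow> good g \<Longrightarrow> good (ladd f g)"
  by (metis good_common good_def goodb_ladd)

lemma goodb_lsub: "goodb N C f \<Longrightarrow> goodb N C g \<Longrightarrow> goodb N C (lsub f g)"
  unfolding goodb_def lsub_def by (metis diff_self diff_zero eq_iff_diff_eq_0)

lemma good_lsub: "good f \<Longrightarrow> good g \<Longrightarrow> good (lsub f g)"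
  by (metis good_common good_def goodb_lsub)

lemma good_uminus: "good (f::'a::comm_ring_1 lser) \<Longrightarrow> good (\<lambda>e. - f e)"
  unfolding good_def goodb_def by simp

lemma good_lscale: "good f \<Longrightarrow> good (lscale c f)"
  unfolding good_def goodb_def lscale_def by (metis mult_zero_right)

lemma lmult_comm:
  assumes "good f" "good g"
  shows "lmult f g = lmult g f"
proof
  fix e
  have "lmult f g e = (\<Sum>a. f a * g (\<lambda>l. e l - a l))" by (rule lmult_Sum_any[OF assms])
  also have "\<dots> = (\<Sum>a. g a * f (\<lambda>l. e l - a l))"
  proof (rule Sum_any.reindex_cong[of "\<lambda>a l. e l - a l"])
    have inv: "(\<lambda>a l. e l - a l) \<circ> (\<lambda>a l. e l - a l) = id"
      by (rule ext) (simp add: o_def)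
    show "bij (\<lambda>a l. e l - a l)"
      by (rule o_bij[OF inv inv])
    show "(\<lambda>a. f a * g (\<lambda>l. e l - a l)) \<circ> (\<lambda>a l. e l - a l) = (\<lambda>a. g a * f (\<lambda>l. e l - a l))"
      by (rule ext) (simp add: o_def mult.commute)
  qed
  also have "\<dots> = lmult g f e" by (rule lmult_Sum_any[OF assms(2,1), symmetric])
  finally show "lmult f g e = lmult g f e" .
qed

lemma lmult_one: "good f \<Longrightarrow> lmult (lconst 1) f = f"
proof
  fix e assume "good f"
  have "lmult (lconst 1) f e = (\<Sum>a. lconst 1 a * f (\<lambda>l. e l - a l))"
    by (rule lmult_Sum_any[OF good_lconst \<open>good f\<close>])
  also have "\<dots> = (\<Sum>a. if a = (\<lambda>_. 0) then f (\<lambda>l. e l - a l) else 0)"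
    by (rule Sum_any.cong) (auto simp: lconst_def)
  also have "\<dots> = f e" by simp
  finally show "lmult (lconst 1) f e = f e" .
qed

lemma ladd_lmult:
  assumes "good f" "good g" "good h"
  shows "lmult (ladd f g) h = ladd (lmult f h) (lmult g h)"
proof
  fix e
  obtain N C where f: "goodb N C f" and g: "goodb N C g" and "0 \<le> C" using good_common[OF assms(1,2)] by blast
  obtain N' C' where f': "goodb N' C' (ladd f g)" and h: "goodb N' C' h" using good_common[OF good_ladd[OF assms(1,2)] assms(3)] by blast
  obtain N2 C2 where f2: "goodb N2 C2 f" and h2: "goodb N2 C2 h" using good_common[OF assms(1,3)] by blast
  obtain N3 C3 where g3: "goodb N3 C3 g" and h3: "goodb N3 C3 h" using good_common[OF assms(2,3)] by blast
  have "lmult (ladd f g) h e = (\<Sum>a. (f a + g a) * h (\<lambda>l. e l - a l))"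
    by (subst lmult_Sum_any[OF good_ladd[OF assms(1,2)] assms(3)]) (simp add: ladd_def)
  also have "\<dots> = (\<Sum>a. f a * h (\<lambda>l. e l - a l) + g a * h (\<lambda>l. e l - a l))"
    by (simp add: distrib_right)
  also have "\<dots> = (\<Sum>a. f a * h (\<lambda>l. e l - a l)) + (\<Sum>a. g a * h (\<lambda>l. e l - a l))"
    by (rule Sum_any.distrib)
      (rule finite_subset[OF _ lmult_finite[OF f2 h2, of e]] finite_subset[OF _ lmult_finite[OF g3 h3, of e]], auto)+
  also have "\<dots> = ladd (lmult f h) (lmult g h) e"
    by (simp add: ladd_def lmult_Sum_any assms)
  finally show "lmult (ladd f g) h e = ladd (lmult f h) (lmult g h) e" .
qed

lemma lmult_assoc:
  assumes "good f" "good g" "good h"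
  shows "lmult (lmult f g) h = lmult f (lmult g h)"
proof
  fix e
  obtain N C0 where f0: "goodb N C0 f" and g0: "goodb N C0 g" and "0 \<le> C0" using good_common[OF assms(1,2)] by blast
  obtain N' C' where h0: "goodb N' C' h" using assms(3) by (auto simp: good_def)
  define M where "M = max N N'"
  define C where "C = max C0 (max C' 0)"
  have f: "goodb M C f" using goodb_mono[OF f0, of M C] by (simp add: M_def C_def)
  have g: "goodb M C g" using goodb_mono[OF g0, of M C] by (simp add: M_def C_def)
  have h: "goodb M C h" using goodb_mono[OF h0, of M C] by (simp add: M_def C_def)
  define S where "S = (\<Sum>k=1..M. \<bar>ss M k e\<bar>)"
  define B where "B = box M (- 3 * C - S) (2 * C)"
  have finB: "finite (B \<times> B)" by (simp add: B_def finite_box)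
  have Sk: "\<bar>ss M k e\<bar> \<le> S" if "k \<in> {1..M}" for k
    unfolding S_def by (rule member_le_sum) (use that in auto)
  have key: "a \<in> B \<and> b \<in> B \<and> (\<lambda>l. a l - b l) \<in> B" if fb: "f b \<noteq> 0" and gab: "g (\<lambda>l. a l - b l) \<noteq> 0" and hea: "h (\<lambda>l. e l - a l) \<noteq> 0" for a b
  proof -
    note F = goodbD[OF f fb] and G = goodbD[OF g gab] and H = goodbD[OF h hea]
    have sa: "supp_ok M a" using ss_supp_ok_add[of M b "\<lambda>l. a l - b l"] F G by simp
    have "ss M k a \<le> 2 * C \<and> - 3 * C - S \<le> ss M k a \<and> ss M k b \<le> 2 * C \<and> - 3 * C - S \<le> ss M k b
       \<and> ss M k (\<lambda>l. a l - b l) \<le> 2 * C \<and> - 3 * C - S \<le> ss M k (\<lambda>l. a l - b l)"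
      if k: "k \<in> {1..M}" for k
    proof -
      have 1: "ss M k b \<le> C" using F k by auto
      have 2: "ss M k (\<lambda>l. a l - b l) \<le> C" using G k by auto
      have 3: "ss M k (\<lambda>l. e l - a l) \<le> C" using H k by auto
      note 5 = ss_diff[of M k a b] ss_diff[of M k e a]
      have 4: "\<bar>ss M k e\<bar> \<le> S" using Sk k .
      show ?thesis using 1 2 3 4 5 \<open>0 \<le> C0\<close> C_def by linarith
    qed
    then show ?thesis using sa F G by (auto simp: B_def box_def)
  qed
  have "lmult (lmult f g) h e = (\<Sum>a. (\<Sum>b. f b * g (\<lambda>l. a l - b l)) * h (\<lambda>l. e l - a l))"
    by (simp add: lmult_Sum_any assms good_lmult)
  also have "\<dots> = (\<Sum>a. (\<Sum>b. f b * g (\<lambda>l. a l - b l) * h (\<lambda>l. e l - a l)))"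
  proof (rule Sum_any.cong, rule Sum_any_left_distrib)
    fix a
    show "finite {b. f b * g (\<lambda>l. a l - b l) \<noteq> 0}"
      by (rule finite_subset[OF _ lmult_finite[OF f g, of a]]) auto
  qed
  also have "\<dots> = (\<Sum>(a,b). f b * g (\<lambda>l. a l - b l) * h (\<lambda>l. e l - a l))"
  proof (rule Sum_any.cartesian_product[OF finB], safe)
    fix a b assume ne: "f b * g (\<lambda>l. a l - b l) * h (\<lambda>l. e l - a l) \<noteq> 0"
    then have "f b \<noteq> 0" "g (\<lambda>l. a l - b l) \<noteq> 0" "h (\<lambda>l. e l - a l) \<noteq> 0" by auto
    then show "a \<in> B" using key by blast
  next
    fix b a assume ne: "f b * g (\<lambda>l. a l - b l) * h (\<lambda>l. e l - a l) \<noteq> 0"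
    then have "f b \<noteq> 0" "g (\<lambda>l. a l - b l) \<noteq> 0" "h (\<lambda>l. e l - a l) \<noteq> 0" by auto
    then show "b \<in> B" using key by blast
  qed
  also have "\<dots> = (\<Sum>(b,c). f b * (g c * h (\<lambda>l. e l - b l - c l)))"
  proof (rule Sum_any.reindex_cong[of "\<lambda>(b,c). (\<lambda>l. b l + c l, b)"])
    show "bij (\<lambda>(b::nat\<Rightarrow>int, c::nat\<Rightarrow>int). (\<lambda>l. b l + c l, b))"
    proof (rule bijI)
      show "inj (\<lambda>(b::nat\<Rightarrow>int, c::nat\<Rightarrow>int). (\<lambda>l. b l + c l, b))"
        by (rule inj_on_inverseI[where g="\<lambda>(a,b). (b, \<lambda>l. a l - b l)"]) auto
      show "surj (\<lambda>(b::nat\<Rightarrow>int, c::nat\<Rightarrow>int). (\<lambda>l. b l + c l, b))"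
      proof (rule surjI[of _ "\<lambda>(a,b). (b, \<lambda>l. a l - b l)"])
        fix p :: "(nat\<Rightarrow>int) \<times> (nat\<Rightarrow>int)"
        show "(\<lambda>(b, c). (\<lambda>l. b l + c l, b)) ((\<lambda>(a, b). (b, \<lambda>l. a l - b l)) p) = p"
          by (cases p) auto
      qed
    qed
    show "(\<lambda>(a, b). f b * g (\<lambda>l. a l - b l) * h (\<lambda>l. e l - a l)) \<circ> (\<lambda>(b, c). (\<lambda>l. b l + c l, b)) =
      (\<lambda>(b, c). f b * (g c * h (\<lambda>l. e l - b l - c l)))"
      by (rule ext) (auto simp: mult.assoc diff_diff_eq)
  qed
  also have "\<dots> = (\<Sum>b. (\<Sum>c. f b * (g c * h (\<lambda>l. e l - b l - c l))))"
  proof (rule Sum_any.cartesian_product[symmetric, OF finB])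
    show "{b. \<exists>c. f b * (g c * h (\<lambda>l. e l - b l - c l)) \<noteq> 0} \<times> {c. \<exists>b. f b * (g c * h (\<lambda>l. e l - b l - c l)) \<noteq> 0} \<subseteq> B \<times> B"
    proof safe
      fix b c assume ne: "f b * (g c * h (\<lambda>l. e l - b l - c l)) \<noteq> 0"
      have e1: "(\<lambda>l. e l - b l - c l) = (\<lambda>l. e l - (b l + c l))" by (auto simp: algebra_simps)
      have e2: "(\<lambda>l. (b l + c l) - b l) = c" by auto
      have "f b \<noteq> 0" "g (\<lambda>l. (b l + c l) - b l) \<noteq> 0" "h (\<lambda>l. e l - (b l + c l)) \<noteq> 0"
        using ne e1 e2 by auto
      then show "b \<in> B" using key[of b "\<lambda>l. b l + c l"] by blast
    next
      fix c b assume ne: "f b * (g c * h (\<lambda>l. e l - b l - c l)) \<noteq> 0"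
      have e1: "(\<lambda>l. e l - b l - c l) = (\<lambda>l. e l - (b l + c l))" by (auto simp: algebra_simps)
      have e2: "(\<lambda>l. (b l + c l) - b l) = c" by auto
      have "f b \<noteq> 0" "g (\<lambda>l. (b l + c l) - b l) \<noteq> 0" "h (\<lambda>l. e l - (b l + c l)) \<noteq> 0"
        using ne e1 e2 by auto
      then show "c \<in> B" using key[of b "\<lambda>l. b l + c l"] e2 by metis
    qed
  qed
  also have "\<dots> = (\<Sum>b. f b * (\<Sum>c. g c * h (\<lambda>l. (\<lambda>l. e l - b l) l - c l)))"
  proof (rule Sum_any.cong, rule Sum_any_right_distrib[symmetric])
    fix b
    show "finite {c. g c * h (\<lambda>l. (\<lambda>l. e l - b l) l - c l) \<noteq> 0}"
      by (rule finite_subset[OF _ lmult_finite[OF g h, of "\<lambda>l. e l - b l"]]) auto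
  qed
  also have "\<dots> = lmult f (lmult g h) e"
    by (simp add: lmult_Sum_any assms good_lmult)
  finally show "lmult (lmult f g) h e = lmult f (lmult g h) e" .
qed


typedef (overloaded) ('a::comm_ring_1) gs = "{f :: 'a lser. good f}" morphisms rep Abs_gs
  by (rule exI[of _ "\<lambda>_. 0"]) (simp add: good_zero)

setup_lifting type_definition_gs

instantiation gs :: (comm_ring_1) comm_ring_1
begin
lift_definition zero_gs :: "'a gs" is "\<lambda>_. 0" by (rule good_zero)
lift_definition one_gs :: "'a gs" is "lconst 1" by (rule good_lconst)
lift_definition plus_gs :: "'a gs \<Rightarrow> 'a gs \<Rightarrow> 'a gs" is ladd by (rule good_ladd)
lift_definition minus_gs :: "'a gs \<Rightarrow> 'a gs \<Rightarrow> 'a gs" is lsub by (rule good_lsub)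
lift_definition uminus_gs :: "'a gs \<Rightarrow> 'a gs" is "\<lambda>f e. - f e" by (rule good_uminus)
lift_definition times_gs :: "'a gs \<Rightarrow> 'a gs \<Rightarrow> 'a gs" is lmult by (rule good_lmult)
instance
proof
  fix a b c :: "'a gs"
  show "a * b * c = a * (b * c)" by transfer (rule lmult_assoc)
  show "a * b = b * a" by transfer (rule lmult_comm)
  show "1 * a = a" by transfer (rule lmult_one)
  show "(a + b) * c = a * c + b * c" by transfer (rule ladd_lmult)
  show "a + b + c = a + (b + c)" by transfer (simp add: ladd_def add.assoc)
  show "a + b = b + a" by transfer (simp add: ladd_def add.commute)
  show "0 + a = a" by transfer (simp add: ladd_def)
  show "- a + a = 0" by transfer (simp add: ladd_def)
  show "a - b = a + - b" by transfer (simp add: lsub_def ladd_def)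
  show "(0::'a gs) \<noteq> 1"
  proof transfer
    show "(\<lambda>_. 0) \<noteq> (lconst 1 :: 'a lser)"
      by (metis lconst_def zero_neq_one)
  qed
qed
end

lemma rep_times: "rep (a * b) = lmult (rep a) (rep b)" by transfer simp
lemma rep_plus: "rep (a + b) = ladd (rep a) (rep b)" by transfer simp
lemma rep_minus: "rep (a - b) = lsub (rep a) (rep b)" by transfer simp
lemma rep_one: "rep 1 = lconst 1" by transfer simp
lemma rep_zero: "rep 0 = (\<lambda>_. 0)" by transfer simp
lemma rep_good: "good (rep a)" using rep by auto
lemma rep_Abs: "good f \<Longrightarrow> rep (Abs_gs f) = f" by (simp add: Abs_gs_inverse)


definition cst :: "'a::comm_ring_1 \<Rightarrow> 'a gs" where "cst c = Abs_gs (lconst c)"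
definition mono :: "(nat \<Rightarrow> int) \<Rightarrow> 'a::comm_ring_1 gs" where "mono d = Abs_gs (lmono d)"

lemma good_lmono:
  assumes s: "supp_ok N d" shows "good (lmono d :: 'a::comm_ring_1 lser)"
proof -
  have "goodb N (\<Sum>k=1..N. \<bar>ss N k d\<bar>) (lmono d :: 'a lser)"
    unfolding goodb_def
  proof (intro allI impI)
    fix e :: "nat \<Rightarrow> int" assume "(lmono d e :: 'a) \<noteq> 0"
    then have ed: "e = d" by (metis lmono_def)
    have "\<bar>ss N k d\<bar> \<le> (\<Sum>k=1..N. \<bar>ss N k d\<bar>)" if "k \<in> {1..N}" for k
      using that by (intro member_le_sum) auto
    then have "ss N k d \<le> (\<Sum>k=1..N. \<bar>ss N k d\<bar>)" if "k \<in> {1..N}" for k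
      using that by force
    then show "supp_ok N e \<and> (\<forall>k\<in>{1..N}. ss N k e \<le> (\<Sum>k=1..N. \<bar>ss N k d\<bar>))"
      using s ed by simp
  qed
  then show ?thesis by (auto simp: good_def)
qed

lemma rep_cst: "rep (cst c) = lconst c" by (simp add: cst_def rep_Abs good_lconst)

lemma rep_mono: "supp_ok N d \<Longrightarrow> rep (mono d) = lmono d"
  by (simp add: mono_def rep_Abs good_lmono)

lemma lmult_lmono_left:
  assumes g: "good (lmono d :: 'a::comm_ring_1 lser)" "good (f::'a lser)"
  shows "lmult (lmono d) f e = f (\<lambda>l. e l - d l)"
proof -
  have "lmult (lmono d) f e = (\<Sum>a. lmono d a * f (\<lambda>l. e l - a l))" by (rule lmult_Sum_any[OF g])
  also have "\<dots> = (\<Sum>a. if a = d then f (\<lambda>l. e l - a l) else 0)"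
    by (rule Sum_any.cong) (simp add: lmono_def)
  also have "\<dots> = f (\<lambda>l. e l - d l)" by simp
  finally show ?thesis .
qed

lemma rep_mono_mult: "supp_ok N d \<Longrightarrow> rep (mono d * f) e = rep f (\<lambda>l. e l - d l)"
  by (simp add: rep_times rep_mono lmult_lmono_left good_lmono rep_good)

lemma rep_cst_mult: "rep (cst c * f) e = c * rep f e"
proof -
  have "lconst c = lscale c (lmono (\<lambda>_. 0))" by (simp add: lconst_def lscale_def lmono_def fun_eq_iff)
  have "rep (cst c * f) e = (\<Sum>a. lconst c a * rep f (\<lambda>l. e l - a l))"
    by (simp add: rep_times rep_cst lmult_Sum_any good_lconst rep_good)
  also have "\<dots> = (\<Sum>a. if a = (\<lambda>_. 0) then c * rep f (\<lambda>l. e l - a l) else 0)"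
    by (rule Sum_any.cong) (simp add: lconst_def)
  also have "\<dots> = c * rep f e" by simp
  finally show ?thesis .
qed

lemma cst_mult: "cst (a * b) = cst a * cst b"
  by (rule rep_inject[THEN iffD1], rule ext) (simp add: rep_cst_mult rep_cst lconst_def)
lemma cst_add: "cst (a + b) = cst a + cst b"
  by (rule rep_inject[THEN iffD1], rule ext) (simp add: rep_plus rep_cst lconst_def ladd_def)
lemma cst_diff: "cst (a - b) = cst a - cst b"
  by (rule rep_inject[THEN iffD1], rule ext) (simp add: rep_minus rep_cst lconst_def lsub_def)
lemma cst_one: "cst 1 = 1"
  by (rule rep_inject[THEN iffD1]) (simp add: rep_one rep_cst)
lemma cst_zero: "cst 0 = 0"
  by (rule rep_inject[THEN iffD1]) (simp add: rep_zero rep_cst lconst_def)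
lemma cst_power: "cst (a ^ k) = cst a ^ k"
  by (induction k) (simp_all add: cst_one cst_mult)
lemma cst_prod_list: "cst (prod_list (map f xs)) = prod_list (map (\<lambda>x. cst (f x)) xs)"
  by (induction xs) (simp_all add: cst_one cst_mult)
lemma cst_sum: "finite S \<Longrightarrow> cst (sum f S) = (\<Sum>x\<in>S. cst (f x))"
  by (induction S rule: finite_induct) (simp_all add: cst_zero cst_add)
lemma cst_prod: "finite S \<Longrightarrow> cst (prod f S) = (\<Prod>x\<in>S. cst (f x))"
  by (induction S rule: finite_induct) (simp_all add: cst_one cst_mult)

lemma lmult_lmono_lmono:
  assumes g: "good (lmono a :: 'a::comm_ring_1 lser)" "good (lmono b :: 'a lser)"
  shows "lmult (lmono a) (lmono b) = (lmono (\<lambda>l. a l + b l) :: 'a lser)"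
proof (rule ext)
  fix e
  have "lmult (lmono a) (lmono b) e = (lmono b (\<lambda>l. e l - a l) :: 'a)" by (rule lmult_lmono_left[OF g])
  also have "\<dots> = (lmono (\<lambda>l. a l + b l) e :: 'a)"
  proof -
    have "((\<lambda>l. e l - a l) = b) = (e = (\<lambda>l. a l + b l))"
    proof
      assume "(\<lambda>l. e l - a l) = b"
      then have "\<And>l. e l - a l = b l" by metis
      then show "e = (\<lambda>l. a l + b l)" by (intro ext) (metis add.commute diff_add_cancel)
    next
      assume "e = (\<lambda>l. a l + b l)" then show "(\<lambda>l. e l - a l) = b" by simp
    qed
    then show ?thesis by (simp add: lmono_def)
  qed
  finally show "lmult (lmono a) (lmono b) e = (lmono (\<lambda>l. a l + b l) e :: 'a)" .
qed

lemma mono_mult: "supp_ok N a \<Longrightarrow> supp_ok N b \<Longrightarrow> mono a * mono b = mono (\<lambda>l. a l + b l)"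
  by (rule rep_inject[THEN iffD1])
    (simp add: rep_times rep_mono lmult_lmono_lmono good_lmono rep_mono[OF ss_supp_ok_add[of N a b]])

lemma supp_ok_zero: "supp_ok N (\<lambda>_. 0)" by (simp add: supp_ok_def)

lemma mono_zero: "mono (\<lambda>_. 0) = 1"
  by (rule rep_inject[THEN iffD1]) (simp add: rep_mono[OF supp_ok_zero] rep_one lmono_def lconst_def)

definition U :: "nat \<Rightarrow> 'a::comm_ring_1 gs" where "U i = mono (uvec i)"
definition Uinv :: "nat \<Rightarrow> 'a::comm_ring_1 gs" where "Uinv i = mono (\<lambda>l. - uvec i l)"

lemma supp_uvec: "1 \<le> i \<Longrightarrow> supp_ok i (uvec i)"
  by (auto simp: supp_ok_def uvec_def)
lemma supp_uvec_neg: "1 \<le> i \<Longrightarrow> supp_ok i (\<lambda>l. - uvec i l)"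
  by (auto simp: supp_ok_def uvec_def)

lemma U_Uinv: "1 \<le> i \<Longrightarrow> U i * Uinv i = 1"
  unfolding U_def Uinv_def
  by (subst mono_mult[OF supp_uvec supp_uvec_neg]) (simp_all add: mono_zero)

lemma rep_U: "1 \<le> i \<Longrightarrow> rep (U i) = uvar i"
  by (simp add: U_def rep_mono[OF supp_uvec] uvar_def)

lemma rep_Uinv: "1 \<le> i \<Longrightarrow> rep (Uinv i) = lmono (\<lambda>l. - uvec i l)"
  by (simp add: Uinv_def rep_mono[OF supp_uvec_neg])


lemma ss_lin: "ss N k (\<lambda>l. p * a l - q * b l) = p * ss N k a - q * ss N k b"
  unfolding ss_def by (simp add: sum_subtractf sum_distrib_left)

lemma ss_uvec: "ss N k (uvec j) = (if k \<le> j \<and> j \<le> N then 1 else 0)"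
proof -
  have "(\<Sum>l=k..N. uvec j l) = (\<Sum>l\<in>{k..N}. if l = j then 1 else 0)" by (simp add: uvec_def)
  also have "\<dots> = (if k \<le> j \<and> j \<le> N then 1 else 0)" by (simp add: sum.delta)
  finally show ?thesis by (simp add: ss_def)
qed

lemma lgeom_nz: "lgeom \<alpha> c \<beta> e \<noteq> 0 \<Longrightarrow> \<exists>m::nat. e = (\<lambda>l. int m * \<beta> l - (int m + 1) * \<alpha> l)"
  unfolding lgeom_def by (metis (mono_tags, lifting) empty_Collect_eq sum.empty)

lemma geom_inj:
  assumes "\<alpha> \<noteq> \<beta>" and "(\<lambda>l. int m * \<beta> l - (int m + 1) * \<alpha> l) = (\<lambda>l. int m' * \<beta> l - (int m' + 1) * \<alpha> l)"
  shows "m = m'"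
proof -
  obtain l where l: "\<alpha> l \<noteq> \<beta> l" using assms(1) by (auto simp: fun_eq_iff)
  have "int m * \<beta> l - (int m + 1) * \<alpha> l = int m' * \<beta> l - (int m' + 1) * \<alpha> l"
    using fun_cong[OF assms(2), of l] by simp
  then have "(int m - int m') * (\<beta> l - \<alpha> l) = 0" by (simp add: algebra_simps)
  then show ?thesis using l by simp
qed

lemma lgeom_at: "\<alpha> \<noteq> \<beta> \<Longrightarrow> lgeom \<alpha> c \<beta> (\<lambda>l. int m * \<beta> l - (int m + 1) * \<alpha> l) = c ^ m"
proof -
  assume ab: "\<alpha> \<noteq> \<beta>"
  have "{m'::nat. (\<lambda>l. int m * \<beta> l - (int m + 1) * \<alpha> l) = (\<lambda>l. int m' * \<beta> l - (int m' + 1) * \<alpha> l)} = {m}"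
    using geom_inj[OF ab] by blast
  then show ?thesis by (simp add: lgeom_def)
qed

lemma lgeom_zero: "(\<And>m::nat. e \<noteq> (\<lambda>l. int m * \<beta> l - (int m + 1) * \<alpha> l)) \<Longrightarrow> lgeom \<alpha> c \<beta> e = 0"
  using lgeom_nz by blast

lemma uvec_0: "1 \<le> i \<Longrightarrow> uvec i 0 = 0" by (simp add: uvec_def)

lemma goodb_geom:
  assumes i: "1 \<le> i" and b: "\<beta> = (\<lambda>_. 0) \<or> (\<exists>j. 1 \<le> j \<and> j < i \<and> \<beta> = uvec j)"
  shows "goodb i 0 (lgeom (uvec i) c \<beta>)"
  unfolding goodb_def
proof (intro allI impI)
  fix e assume "lgeom (uvec i) c \<beta> e \<noteq> 0"
  then obtain m :: nat where e: "e = (\<lambda>l. int m * \<beta> l - (int m + 1) * uvec i l)" using lgeom_nz by blast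
  have b0: "\<beta> 0 = 0" and bN: "\<forall>l>i. \<beta> l = 0" using b by (auto simp: uvec_def)
  have "supp_ok i e" using b0 bN i by (auto simp: e supp_ok_def uvec_def)
  moreover have "ss i k e \<le> 0" if k: "k \<in> {1..i}" for k
  proof -
    have "ss i k e = int m * ss i k \<beta> - (int m + 1) * ss i k (uvec i)" unfolding e by (rule ss_lin)
    moreover have "ss i k (uvec i) = 1" using k by (simp add: ss_uvec)
    moreover have "ss i k \<beta> \<le> 1"
    proof (cases "\<beta> = (\<lambda>_. 0)")
      case True then show ?thesis by (simp add: ss_def)
    next
      case False then obtain j where "\<beta> = uvec j" using b by blast
      then show ?thesis by (simp add: ss_uvec)
    qed
    moreover have "int m * ss i k \<beta> \<le> int m * 1"
      by (rule mult_left_mono) (use \<open>ss i k \<beta> \<le> 1\<close> in auto)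
    ultimately show ?thesis by simp
  qed
  ultimately show "supp_ok i e \<and> (\<forall>k\<in>{1..i}. ss i k e \<le> 0)" by blast
qed

definition Gx :: "nat \<Rightarrow> 'a::comm_ring_1 \<Rightarrow> 'a gs" where "Gx i c = Abs_gs (lgeom (uvec i) c (\<lambda>_. 0))"
definition Gu :: "nat \<Rightarrow> 'a::comm_ring_1 \<Rightarrow> nat \<Rightarrow> 'a gs" where "Gu i c j = Abs_gs (lgeom (uvec i) c (uvec j))"

lemma rep_Gx: "1 \<le> i \<Longrightarrow> rep (Gx i c) = lgeom (uvec i) c (\<lambda>_. 0)"
  unfolding Gx_def by (rule rep_Abs) (use goodb_geom[of i "\<lambda>_. 0"] in \<open>auto simp: good_def\<close>)

lemma rep_Gu: "1 \<le> j \<Longrightarrow> j < i \<Longrightarrow> rep (Gu i c j) = lgeom (uvec i) c (uvec j)"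
  unfolding Gu_def by (rule rep_Abs) (use goodb_geom[of i "uvec j"] in \<open>auto simp: good_def\<close>)

lemma geom_identity:
  assumes ab: "\<alpha> \<noteq> \<beta>" and sa: "supp_ok N \<alpha>" and sb: "supp_ok N \<beta>" and g: "good (lgeom \<alpha> c \<beta>)"
  shows "(mono \<alpha> - cst c * mono \<beta>) * Abs_gs (lgeom \<alpha> c \<beta>) = 1"
proof (rule rep_inject[THEN iffD1], rule ext)
  fix e
  define G where "G = Abs_gs (lgeom \<alpha> c \<beta>)"
  have rG: "rep G = lgeom \<alpha> c \<beta>" using g by (simp add: G_def rep_Abs)
  have "(mono \<alpha> - cst c * mono \<beta>) * G = mono \<alpha> * G - cst c * (mono \<beta> * G)" by (simp add: algebra_simps)
  then have "rep ((mono \<alpha> - cst c * mono \<beta>) * G) e = lgeom \<alpha> c \<beta> (\<lambda>l. e l - \<alpha> l) - c * lgeom \<alpha> c \<beta> (\<lambda>l. e l - \<beta> l)"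
    by (simp add: rep_minus lsub_def rep_cst_mult rep_mono_mult[OF sa] rep_mono_mult[OF sb] rG)
  also have "\<dots> = lconst 1 e"
  proof (cases "\<exists>M::nat. e = (\<lambda>l. int M * (\<beta> l - \<alpha> l))")
    case True
    then obtain M :: nat where eM: "e = (\<lambda>l. int M * (\<beta> l - \<alpha> l))" by blast
    have e1: "(\<lambda>l. e l - \<alpha> l) = (\<lambda>l. int M * \<beta> l - (int M + 1) * \<alpha> l)"
      by (rule ext) (simp add: eM algebra_simps)
    have g1: "lgeom \<alpha> c \<beta> (\<lambda>l. e l - \<alpha> l) = c ^ M"
      by (subst e1) (rule lgeom_at[OF ab])
    show ?thesis
    proof (cases M)
      case 0
      then have "e = (\<lambda>_. 0)" using eM by simp
      moreover have "lgeom \<alpha> c \<beta> (\<lambda>l. e l - \<beta> l) = 0"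
      proof (rule lgeom_zero)
        fix m :: nat
        show "(\<lambda>l. e l - \<beta> l) \<noteq> (\<lambda>l. int m * \<beta> l - (int m + 1) * \<alpha> l)"
        proof
          assume h: "(\<lambda>l. e l - \<beta> l) = (\<lambda>l. int m * \<beta> l - (int m + 1) * \<alpha> l)"
          have "\<alpha> l = \<beta> l" for l
          proof -
            have "e l - \<beta> l = int m * \<beta> l - (int m + 1) * \<alpha> l" using fun_cong[OF h, of l] by simp
            then have "(int m + 1) * (\<alpha> l - \<beta> l) = 0" using \<open>e = (\<lambda>_. 0)\<close> by (simp add: algebra_simps)
            then show ?thesis by simp
          qed
          then show False using ab by blast
        qed
      qed
      ultimately show ?thesis using g1 0 by (simp add: lconst_def)
    next
      case (Suc M')
      have e2: "(\<lambda>l. e l - \<beta> l) = (\<lambda>l. int M' * \<beta> l - (int M' + 1) * \<alpha> l)"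
        by (rule ext) (simp add: eM Suc algebra_simps)
      have "e \<noteq> (\<lambda>_. 0)"
      proof
        assume "e = (\<lambda>_. 0)"
        obtain l where l: "\<alpha> l \<noteq> \<beta> l" using ab by (auto simp: fun_eq_iff)
        have "int M * (\<beta> l - \<alpha> l) = 0" using fun_cong[OF eM, of l] \<open>e = (\<lambda>_. 0)\<close> by simp
        then show False using l Suc by simp
      qed
      moreover have "lgeom \<alpha> c \<beta> (\<lambda>l. e l - \<beta> l) = c ^ M'"
        by (subst e2) (rule lgeom_at[OF ab])
      ultimately show ?thesis using g1 Suc by (simp add: lconst_def)
    qed
  next
    case False
    have z1: "lgeom \<alpha> c \<beta> (\<lambda>l. e l - \<alpha> l) = 0"
    proof (rule lgeom_zero)
      fix m :: nat
      show "(\<lambda>l. e l - \<alpha> l) \<noteq> (\<lambda>l. int m * \<beta> l - (int m + 1) * \<alpha> l)"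
      proof
        assume h: "(\<lambda>l. e l - \<alpha> l) = (\<lambda>l. int m * \<beta> l - (int m + 1) * \<alpha> l)"
        have "e = (\<lambda>l. int m * (\<beta> l - \<alpha> l))"
        proof (rule ext)
          fix l show "e l = int m * (\<beta> l - \<alpha> l)" using fun_cong[OF h, of l] by (simp add: algebra_simps)
        qed
        then show False using False by blast
      qed
    qed
    have z2: "lgeom \<alpha> c \<beta> (\<lambda>l. e l - \<beta> l) = 0"
    proof (rule lgeom_zero)
      fix m :: nat
      show "(\<lambda>l. e l - \<beta> l) \<noteq> (\<lambda>l. int m * \<beta> l - (int m + 1) * \<alpha> l)"
      proof
        assume h: "(\<lambda>l. e l - \<beta> l) = (\<lambda>l. int m * \<beta> l - (int m + 1) * \<alpha> l)"
        have "e = (\<lambda>l. int (Suc m) * (\<beta> l - \<alpha> l))"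
        proof (rule ext)
          fix l show "e l = int (Suc m) * (\<beta> l - \<alpha> l)" using fun_cong[OF h, of l] by (simp add: algebra_simps)
        qed
        then show False using False by blast
      qed
    qed
    have "e \<noteq> (\<lambda>_. 0)"
    proof
      assume "e = (\<lambda>_. 0)"
      then have "e = (\<lambda>l. int 0 * (\<beta> l - \<alpha> l))" by simp
      then show False using False by blast
    qed
    then show ?thesis using z1 z2 by (simp add: lconst_def)
  qed
  also have "\<dots> = rep 1 e" by (simp add: rep_one)
  finally show "rep ((mono \<alpha> - cst c * mono \<beta>) * Abs_gs (lgeom \<alpha> c \<beta>)) e = rep 1 e"
    by (simp add: G_def)
qed

lemma Gx_inv: "1 \<le> i \<Longrightarrow> (U i - cst c) * Gx i c = 1"
proof -
  assume i: "1 \<le> i"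
  have "uvec i \<noteq> (\<lambda>_. 0)" using i by (metis uvec_def zero_neq_one)
  moreover have "U i - cst c = mono (uvec i) - cst c * mono (\<lambda>_. 0)" by (simp add: U_def mono_zero)
  ultimately show ?thesis unfolding Gx_def
    using geom_identity[of "uvec i" "\<lambda>_. 0" i c] supp_uvec[OF i] supp_ok_zero goodb_geom[OF i, of "\<lambda>_. 0" c]
    by (auto simp: good_def)
qed

lemma Gu_inv: "1 \<le> j \<Longrightarrow> j < i \<Longrightarrow> (U i - cst c * U j) * Gu i c j = 1"
proof -
  assume j: "1 \<le> j" "j < i"
  have i: "1 \<le> i" using j by simp
  have "uvec i \<noteq> uvec j" using j by (metis less_irrefl uvec_def zero_neq_one)
  moreover have sj: "supp_ok i (uvec j)" using j by (auto simp: supp_ok_def uvec_def)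
  ultimately show ?thesis unfolding Gu_def U_def
    using geom_identity[of "uvec i" "uvec j" i c] supp_uvec[OF i] goodb_geom[OF i, of "uvec j" c] j
    by (auto simp: good_def)
qed


definition vfree :: "nat \<Rightarrow> 'a::comm_ring_1 gs \<Rightarrow> bool" where
  "vfree v M \<longleftrightarrow> (\<forall>a. rep M a \<noteq> 0 \<longrightarrow> a v = 0)"
definition vpos :: "nat \<Rightarrow> 'a::comm_ring_1 gs \<Rightarrow> bool" where
  "vpos v M \<longleftrightarrow> (\<forall>a. rep M a \<noteq> 0 \<longrightarrow> 0 \<le> a v)"

lemma nz_mult: "rep (A * B) a \<noteq> 0 \<Longrightarrow> \<exists>b. rep A b \<noteq> 0 \<and> rep B (\<lambda>l. a l - b l) \<noteq> 0"
  unfolding rep_times lmult_def by (metis (mono_tags, lifting) empty_Collect_eq sum.empty)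

lemma vfree_mult: "vfree v A \<Longrightarrow> vfree v B \<Longrightarrow> vfree v (A * B)"
  unfolding vfree_def by (metis diff_self eq_iff_diff_eq_0 nz_mult)
lemma vpos_mult: "vpos v A \<Longrightarrow> vpos v B \<Longrightarrow> vpos v (A * B)"
  unfolding vpos_def by (smt (verit, best) nz_mult)
lemma vfree_add: "vfree v A \<Longrightarrow> vfree v B \<Longrightarrow> vfree v (A + B)"
  unfolding vfree_def rep_plus ladd_def by (metis add.right_neutral add_0)
lemma vpos_add: "vpos v A \<Longrightarrow> vpos v B \<Longrightarrow> vpos v (A + B)"
  unfolding vpos_def rep_plus ladd_def by (metis add.right_neutral add_0)
lemma vfree_diff: "vfree v A \<Longrightarrow> vfree v B \<Longrightarrow> vfree v (A - B)"
  unfolding vfree_def rep_minus lsub_def by (metis diff_zero diff_self)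
lemma vpos_diff: "vpos v A \<Longrightarrow> vpos v B \<Longrightarrow> vpos v (A - B)"
  unfolding vpos_def rep_minus lsub_def by (metis diff_zero diff_self)
lemma vfree_cst: "vfree v (cst c)"
  unfolding vfree_def rep_cst lconst_def by (metis)
lemma vfree_one: "vfree v 1"
  using vfree_cst[of v 1] by (simp add: cst_one)
lemma vfree_vpos: "vfree v A \<Longrightarrow> vpos v A"
  unfolding vfree_def vpos_def by auto
lemma vfree_mono: "supp_ok N d \<Longrightarrow> d v = 0 \<Longrightarrow> vfree v (mono d)"
  unfolding vfree_def by (simp add: rep_mono lmono_def)
lemma vpos_mono: "supp_ok N d \<Longrightarrow> 0 \<le> d v \<Longrightarrow> vpos v (mono d)"
  unfolding vpos_def by (simp add: rep_mono lmono_def)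
lemma vfree_U: "1 \<le> i \<Longrightarrow> i \<noteq> v \<Longrightarrow> vfree v (U i)"
  unfolding U_def by (rule vfree_mono[OF supp_uvec]) (auto simp: uvec_def)
lemma vpos_U: "1 \<le> i \<Longrightarrow> vpos v (U i)"
  unfolding U_def by (rule vpos_mono[OF supp_uvec]) (auto simp: uvec_def)
lemma vfree_Uinv: "1 \<le> i \<Longrightarrow> i \<noteq> v \<Longrightarrow> vfree v (Uinv i)"
  unfolding Uinv_def by (rule vfree_mono[OF supp_uvec_neg]) (auto simp: uvec_def)
lemma vfree_Gx: "1 \<le> i \<Longrightarrow> i \<noteq> v \<Longrightarrow> vfree v (Gx i c)"
  unfolding vfree_def rep_Gx by (metis lgeom_nz mult_zero_right diff_zero uvec_def mult_zero_right)
lemma vfree_Gu: "1 \<le> j \<Longrightarrow> j < i \<Longrightarrow> i \<noteq> v \<Longrightarrow> j \<noteq> v \<Longrightarrow> vfree v (Gu i c j)"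
  unfolding vfree_def
proof (intro allI impI)
  fix a assume "1 \<le> j" "j < i" "i \<noteq> v" "j \<noteq> v" "rep (Gu i c j) a \<noteq> 0"
  then obtain m :: nat where "a = (\<lambda>l. int m * uvec j l - (int m + 1) * uvec i l)"
    using lgeom_nz rep_Gu by metis
  then show "a v = 0" using \<open>i \<noteq> v\<close> \<open>j \<noteq> v\<close> by (simp add: uvec_def)
qed
lemma vpos_Gu: "1 \<le> v \<Longrightarrow> v < i \<Longrightarrow> vpos v (Gu i c v)"
  unfolding vpos_def
proof (intro allI impI)
  fix a assume "1 \<le> v" "v < i" "rep (Gu i c v) a \<noteq> 0"
  then obtain m :: nat where "a = (\<lambda>l. int m * uvec v l - (int m + 1) * uvec i l)"
    using lgeom_nz rep_Gu by metis
  then show "0 \<le> a v" using \<open>v < i\<close> by (simp add: uvec_def)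
qed

lemma vfree_prod: "finite S \<Longrightarrow> (\<And>s. s \<in> S \<Longrightarrow> vfree v (F s)) \<Longrightarrow> vfree v (\<Prod>s\<in>S. F s)"
  by (induction S rule: finite_induct) (auto simp: vfree_one vfree_mult)
lemma vfree_prod_list: "(\<And>s. s \<in> set xs \<Longrightarrow> vfree v (F s)) \<Longrightarrow> vfree v (prod_list (map F xs))"
  by (induction xs) (auto simp: vfree_one vfree_mult)

definition cgr :: "nat \<Rightarrow> 'a::comm_ring_1 \<Rightarrow> 'a gs \<Rightarrow> 'a gs \<Rightarrow> bool" where
  "cgr v x L M \<longleftrightarrow> vfree v M \<and> (\<exists>Q. vpos v Q \<and> L = M + (U v - cst x) * Q)"

lemma vpos_Ux: "1 \<le> v \<Longrightarrow> vpos v (U v - cst x)"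
  by (intro vpos_diff vpos_U vfree_vpos vfree_cst)

lemma cgr_refl: "vfree v M \<Longrightarrow> cgr v x M M"
  unfolding cgr_def by (rule conjI, assumption, rule exI[of _ 0]) (simp add: vpos_def rep_zero)

lemma cgr_mult: "1 \<le> v \<Longrightarrow> cgr v x L1 M1 \<Longrightarrow> cgr v x L2 M2 \<Longrightarrow> cgr v x (L1 * L2) (M1 * M2)"
proof -
  assume v: "1 \<le> v" and c1: "cgr v x L1 M1" and c2: "cgr v x L2 M2"
  obtain Q1 where f1: "vfree v M1" and q1: "vpos v Q1" and e1: "L1 = M1 + (U v - cst x) * Q1"
    using c1 by (auto simp: cgr_def)
  obtain Q2 where f2: "vfree v M2" and q2: "vpos v Q2" and e2: "L2 = M2 + (U v - cst x) * Q2"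
    using c2 by (auto simp: cgr_def)
  have "L1 * L2 = M1 * M2 + (U v - cst x) * (Q1 * M2 + M1 * Q2 + (U v - cst x) * Q1 * Q2)"
    by (simp add: e1 e2 algebra_simps)
  moreover have "vpos v (Q1 * M2 + M1 * Q2 + (U v - cst x) * Q1 * Q2)"
    by (intro vpos_add vpos_mult q1 q2 vfree_vpos f1 f2 vpos_Ux v)
  ultimately show ?thesis using f1 f2 by (auto simp: cgr_def intro: vfree_mult)
qed

lemma cgr_add: "cgr v x L1 M1 \<Longrightarrow> cgr v x L2 M2 \<Longrightarrow> cgr v x (L1 + L2) (M1 + M2)"
proof -
  assume c1: "cgr v x L1 M1" and c2: "cgr v x L2 M2"
  obtain Q1 where f1: "vfree v M1" and q1: "vpos v Q1" and e1: "L1 = M1 + (U v - cst x) * Q1"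
    using c1 by (auto simp: cgr_def)
  obtain Q2 where f2: "vfree v M2" and q2: "vpos v Q2" and e2: "L2 = M2 + (U v - cst x) * Q2"
    using c2 by (auto simp: cgr_def)
  have "L1 + L2 = (M1 + M2) + (U v - cst x) * (Q1 + Q2)" by (simp add: e1 e2 algebra_simps)
  then show ?thesis using f1 f2 q1 q2 by (auto simp: cgr_def intro: vfree_add vpos_add)
qed

lemma cgr_diff: "cgr v x L1 M1 \<Longrightarrow> cgr v x L2 M2 \<Longrightarrow> cgr v x (L1 - L2) (M1 - M2)"
proof -
  assume c1: "cgr v x L1 M1" and c2: "cgr v x L2 M2"
  obtain Q1 where f1: "vfree v M1" and q1: "vpos v Q1" and e1: "L1 = M1 + (U v - cst x) * Q1"
    using c1 by (auto simp: cgr_def)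
  obtain Q2 where f2: "vfree v M2" and q2: "vpos v Q2" and e2: "L2 = M2 + (U v - cst x) * Q2"
    using c2 by (auto simp: cgr_def)
  have "L1 - L2 = (M1 - M2) + (U v - cst x) * (Q1 - Q2)" by (simp add: e1 e2 algebra_simps)
  then show ?thesis using f1 f2 q1 q2 by (auto simp: cgr_def intro: vfree_diff vpos_diff)
qed

lemma cgr_prod:
  assumes v: "1 \<le> v" and fin: "finite S" and c: "\<And>s. s \<in> S \<Longrightarrow> cgr v x (F s) (G s)"
  shows "cgr v x (\<Prod>s\<in>S. F s) (\<Prod>s\<in>S. G s)"
  using fin c by (induction S rule: finite_induct) (auto simp: cgr_refl vfree_one cgr_mult[OF v])

lemma cgr_prod_list:
  assumes v: "1 \<le> v" and c: "\<And>s. s \<in> set xs \<Longrightarrow> cgr v x (F s) (G s)"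
  shows "cgr v x (prod_list (map F xs)) (prod_list (map G xs))"
  using c by (induction xs) (auto simp: cgr_refl vfree_one cgr_mult[OF v])

lemma cgr_Uv: "1 \<le> v \<Longrightarrow> cgr v x (U v) (cst x)"
  unfolding cgr_def by (intro conjI vfree_cst exI[of _ 1]) (auto simp: vfree_vpos vfree_one)

lemma cgr_Gu: "1 \<le> v \<Longrightarrow> v < i \<Longrightarrow> cgr v x (Gu i t v) (Gx i (t * x))"
proof -
  assume v: "1 \<le> v" "v < i"
  have i: "1 \<le> i" using v by simp
  have a: "(U i - cst t * U v) * Gu i t v = 1" by (rule Gu_inv[OF v])
  have b: "(U i - cst (t * x)) * Gx i (t * x) = 1" by (rule Gx_inv[OF i])
  have "Gu i t v = Gu i t v * ((U i - cst (t * x)) * Gx i (t * x))" by (simp add: b)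
  also have "\<dots> = Gx i (t * x) * ((U i - cst t * U v) * Gu i t v) + Gu i t v * Gx i (t * x) * (cst t * U v - cst (t * x))"
    by (simp add: algebra_simps)
  also have "\<dots> = Gx i (t * x) + Gu i t v * Gx i (t * x) * (cst t * U v - cst (t * x))"
    by (simp only: a mult_1_right)
  also have "\<dots> = Gx i (t * x) + (U v - cst x) * (cst t * Gu i t v * Gx i (t * x))"
    by (simp add: cst_mult algebra_simps)
  finally have eq: "Gu i t v = Gx i (t * x) + (U v - cst x) * (cst t * Gu i t v * Gx i (t * x))" .
  have "vpos v (cst t * Gu i t v * Gx i (t * x))"
    by (intro vpos_mult vfree_vpos vfree_cst vpos_Gu v vfree_Gx i) (use v in auto)
  moreover have "vfree v (Gx i (t * x))" by (rule vfree_Gx) (use v in auto)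
  ultimately show ?thesis using eq by (auto simp: cgr_def)
qed

lemma ct_core:
  assumes v: "1 \<le> v" and M: "vfree v M" and ev: "e v = 0"
  shows "rep (U v * (Gx v x * M)) e = rep M e"
proof -
  have "rep (U v * (Gx v x * M)) e = rep (Gx v x * M) (\<lambda>l. e l - uvec v l)"
    unfolding U_def by (rule rep_mono_mult[OF supp_uvec[OF v]])
  also have "\<dots> = (\<Sum>a. lgeom (uvec v) x (\<lambda>_. 0) a * rep M (\<lambda>l. (e l - uvec v l) - a l))"
    by (simp add: rep_times lmult_Sum_any rep_good rep_Gx[OF v, symmetric])
  also have "\<dots> = (\<Sum>a. if a = (\<lambda>l. - uvec v l) then rep M e else 0)"
  proof (rule Sum_any.cong)
    fix a
    show "lgeom (uvec v) x (\<lambda>_. 0) a * rep M (\<lambda>l. (e l - uvec v l) - a l) = (if a = (\<lambda>l. - uvec v l) then rep M e else 0)"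
    proof (cases "a = (\<lambda>l. - uvec v l)")
      case True
      have uv: "uvec v \<noteq> (\<lambda>_. 0)" using v by (metis uvec_def zero_neq_one)
      have "a = (\<lambda>l. int 0 * 0 - (int 0 + 1) * uvec v l)" using True by simp
      then have "lgeom (uvec v) x (\<lambda>_. 0) a = x ^ 0"
        using lgeom_at[OF uv, of x 0] by simp
      moreover have "(\<lambda>l. (e l - uvec v l) - a l) = e" using True by simp
      ultimately show ?thesis using True by simp
    next
      case False
      show ?thesis
      proof (cases "lgeom (uvec v) x (\<lambda>_. 0) a = 0")
        case True then show ?thesis using False by simp
      next
        case nz: False
        then obtain m :: nat where am: "a = (\<lambda>l. int m * 0 - (int m + 1) * uvec v l)" using lgeom_nz by blast
        have "m \<noteq> 0" using False am by auto
        then have "(\<lambda>l. (e l - uvec v l) - a l) v \<noteq> 0" using am ev by (simp add: uvec_def)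
        then have "rep M (\<lambda>l. (e l - uvec v l) - a l) = 0" using M unfolding vfree_def by blast
        then show ?thesis using False by simp
      qed
    qed
  qed
  also have "\<dots> = rep M e" by simp
  finally show ?thesis .
qed

lemma ct_lemma:
  assumes v: "1 \<le> v" and c: "cgr v x L M" and ev: "e v = 0"
  shows "rep (U v * Gx v x * L) e = rep M e"
proof -
  obtain Q where M: "vfree v M" and Q: "vpos v Q" and L: "L = M + (U v - cst x) * Q"
    using c by (auto simp: cgr_def)
  have "U v * Gx v x * L = U v * (Gx v x * M) + U v * Q * ((U v - cst x) * Gx v x)"
    by (simp add: L algebra_simps)
  also have "\<dots> = U v * (Gx v x * M) + U v * Q" by (simp add: Gx_inv[OF v])
  finally have eq: "U v * Gx v x * L = U v * (Gx v x * M) + U v * Q" .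
  have "rep (U v * Q) e = rep Q (\<lambda>l. e l - uvec v l)"
    unfolding U_def by (rule rep_mono_mult[OF supp_uvec[OF v]])
  also have "\<dots> = 0"
  proof (rule ccontr)
    assume "rep Q (\<lambda>l. e l - uvec v l) \<noteq> 0"
    then have "0 \<le> (\<lambda>l. e l - uvec v l) v" using Q unfolding vpos_def by blast
    then show False using ev by (simp add: uvec_def)
  qed
  finally show ?thesis using eq ct_core[where v=v and M=M and e=e and x=x, OF v M ev] by (simp add: rep_plus ladd_def)
qed


definition ec :: "'a::field \<Rightarrow> (nat \<Rightarrow> 'a) \<Rightarrow> nat set \<Rightarrow> nat \<Rightarrow> 'a" where
  "ec t x S l = (1 - t) * (\<Prod>m\<in>S - {l}. (x l - t * x m) / (x l - x m))"

locale shom =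
  fixes \<sigma> :: "'a::field \<Rightarrow> 'r::comm_ring_1"
  assumes s_add: "\<sigma> (a + b) = \<sigma> a + \<sigma> b"
    and s_mult: "\<sigma> (a * b) = \<sigma> a * \<sigma> b"
    and s_one: "\<sigma> 1 = 1"
begin
lemma s_zero: "\<sigma> 0 = 0"
  using s_add[of 0 0] by simp
lemma s_diff: "\<sigma> (a - b) = \<sigma> a - \<sigma> b"
  using s_add[of "a - b" b] by (simp add: algebra_simps)
lemma s_sum: "\<sigma> (sum f A) = (\<Sum>a\<in>A. \<sigma> (f a))"
  by (induction A rule: infinite_finite_induct) (simp_all add: s_zero s_add)
lemma s_power: "\<sigma> (a ^ k) = \<sigma> a ^ k"
  by (induction k) (simp_all add: s_one s_mult)
lemma s_inv: "d \<noteq> 0 \<Longrightarrow> \<sigma> (1 / d) * \<sigma> d = 1"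
  by (metis s_mult s_one divide_self_if times_divide_eq_left mult_1)

lemma pf_step:
  assumes fin: "finite S" and yS: "y \<notin> S" and dist: "\<And>l. l \<in> S \<Longrightarrow> x l \<noteq> x y"
    and gy: "(u - \<sigma> (x y)) * g y = 1" and gl: "\<And>l. l \<in> S \<Longrightarrow> (u - \<sigma> (x l)) * g l = 1"
    and IH: "(\<Prod>m\<in>S. (u - \<sigma> (t * x m)) * g m) = \<sigma> (t ^ card S) + (\<Sum>l\<in>S. \<sigma> (ec t x S l) * u * g l)"
    and F: "(\<Prod>m\<in>S. (x y - t * x m) * (1 / (x y - x m))) = t ^ card S + (\<Sum>l\<in>S. ec t x S l * x y * (1 / (x y - x l)))"
  shows "(\<Prod>m\<in>insert y S. (u - \<sigma> (t * x m)) * g m) = \<sigma> (t ^ card (insert y S)) + (\<Sum>l\<in>insert y S. \<sigma> (ec t x (insert y S) l) * u * g l)"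
proof -
  define Y where "Y = x y"
  define n where "n = card S"
  define c where "c l = ec t x S l" for l
  define w where "w l = (1 - t) * Y * c l / (Y - x l)" for l
  have h1: "(u - \<sigma> (t * Y)) * g y = 1 + \<sigma> ((1 - t) * Y) * g y"
  proof -
    have "\<sigma> (t * Y) + \<sigma> ((1 - t) * Y) = \<sigma> Y" by (simp add: s_add[symmetric] algebra_simps)
    then have eq: "u - \<sigma> (t * Y) = (u - \<sigma> Y) + \<sigma> ((1 - t) * Y)" by (simp add: algebra_simps)
    have "(u - \<sigma> (t * Y)) * g y = (u - \<sigma> Y) * g y + \<sigma> ((1 - t) * Y) * g y"
      by (simp only: eq distrib_right)
    then show ?thesis using gy by (simp add: Y_def)
  qed
  have h2: "g y * g l = \<sigma> (1 / (Y - x l)) * (g y - g l)" if l: "l \<in> S" for l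
  proof -
    have "g y - g l = g y * ((u - \<sigma> (x l)) * g l) - g l * ((u - \<sigma> Y) * g y)"
      using gl[OF l] gy by (simp add: Y_def)
    also have "\<dots> = g y * g l * (\<sigma> Y - \<sigma> (x l))" by (simp add: algebra_simps)
    also have "\<dots> = g y * g l * \<sigma> (Y - x l)" by (simp add: s_diff)
    finally have E: "g y - g l = g y * g l * \<sigma> (Y - x l)" .
    have "\<sigma> (1 / (Y - x l)) * (g y - g l) = g y * g l * (\<sigma> (1 / (Y - x l)) * \<sigma> (Y - x l))"
      by (simp only: E mult_ac)
    also have "\<dots> = g y * g l" using dist[OF l] s_inv[of "Y - x l"] by (simp add: Y_def)
    finally show ?thesis by simp
  qed
  have h3: "\<sigma> Y * g y = u * g y - 1" using gy by (simp add: Y_def algebra_simps)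
  have T3: "\<sigma> ((1 - t) * Y) * g y * \<sigma> (t ^ n) = \<sigma> ((1 - t) * t ^ n) * (u * g y - 1)"
  proof -
    have "\<sigma> ((1 - t) * Y) * g y * \<sigma> (t ^ n) = \<sigma> ((1 - t) * t ^ n) * (\<sigma> Y * g y)"
      by (simp only: s_mult mult_ac)
    then show ?thesis by (simp only: h3)
  qed
  have T4: "\<sigma> ((1 - t) * Y) * g y * (\<sigma> (c l) * u * g l) = \<sigma> (w l) * u * g y - \<sigma> (w l) * u * g l"
    if l: "l \<in> S" for l
  proof -
    have "\<sigma> ((1 - t) * Y) * g y * (\<sigma> (c l) * u * g l) = \<sigma> ((1 - t) * Y * c l) * u * (g y * g l)"
      by (simp only: s_mult mult_ac)
    also have "\<dots> = \<sigma> ((1 - t) * Y * c l) * u * (\<sigma> (1 / (Y - x l)) * (g y - g l))" by (simp add: h2[OF l])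
    also have "\<dots> = \<sigma> ((1 - t) * Y * c l * (1 / (Y - x l))) * u * (g y - g l)" by (simp only: s_mult mult_ac)
    also have "\<dots> = \<sigma> (w l) * u * (g y - g l)" by (simp add: w_def)
    finally show ?thesis by (simp add: algebra_simps)
  qed
  have LHS: "(\<Prod>m\<in>insert y S. (u - \<sigma> (t * x m)) * g m) =
     (1 + \<sigma> ((1 - t) * Y) * g y) * (\<sigma> (t ^ n) + (\<Sum>l\<in>S. \<sigma> (c l) * u * g l))"
    using fin yS IH h1 by (simp add: Y_def n_def c_def)
  also have "\<dots> = \<sigma> (t ^ n) + (\<Sum>l\<in>S. \<sigma> (c l) * u * g l) + \<sigma> ((1 - t) * Y) * g y * \<sigma> (t ^ n)
      + (\<Sum>l\<in>S. \<sigma> ((1 - t) * Y) * g y * (\<sigma> (c l) * u * g l))"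
    by (simp add: algebra_simps sum_distrib_left sum.distrib)
  also have "\<dots> = \<sigma> (t ^ n) + (\<Sum>l\<in>S. \<sigma> (c l) * u * g l) + \<sigma> ((1 - t) * t ^ n) * (u * g y - 1)
      + (\<Sum>l\<in>S. \<sigma> (w l) * u * g y - \<sigma> (w l) * u * g l)"
    by (simp add: T3 T4 cong: sum.cong)
  also have "\<dots> = (\<sigma> (t ^ n) - \<sigma> ((1 - t) * t ^ n)) + (\<sigma> ((1 - t) * t ^ n) + (\<Sum>l\<in>S. \<sigma> (w l))) * u * g y
      + (\<Sum>l\<in>S. (\<sigma> (c l) - \<sigma> (w l)) * u * g l)"
    by (simp add: algebra_simps sum_subtractf sum_distrib_right sum_distrib_left)
  also have "\<dots> = \<sigma> (t ^ Suc n) + \<sigma> (ec t x (insert y S) y) * u * g y + (\<Sum>l\<in>S. \<sigma> (ec t x (insert y S) l) * u * g l)"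
  proof -
    have e1: "\<sigma> (t ^ n) - \<sigma> ((1 - t) * t ^ n) = \<sigma> (t ^ Suc n)"
      by (simp add: s_diff[symmetric] algebra_simps)
    have "ec t x (insert y S) y = (1 - t) * (\<Prod>m\<in>S. (Y - t * x m) * (1 / (Y - x m)))"
      using yS by (simp add: ec_def Y_def)
    also have "\<dots> = (1 - t) * (t ^ n + (\<Sum>l\<in>S. c l * Y * (1 / (Y - x l))))"
      using F by (simp add: Y_def n_def c_def)
    also have "\<dots> = (1 - t) * t ^ n + (\<Sum>l\<in>S. w l)"
      by (simp add: w_def sum_distrib_left algebra_simps)
    finally have "ec t x (insert y S) y = (1 - t) * t ^ n + (\<Sum>l\<in>S. w l)" .
    then have e2: "\<sigma> ((1 - t) * t ^ n) + (\<Sum>l\<in>S. \<sigma> (w l)) = \<sigma> (ec t x (insert y S) y)"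
      by (simp add: s_add s_sum)
    have e3: "\<sigma> (c l) - \<sigma> (w l) = \<sigma> (ec t x (insert y S) l)" if l: "l \<in> S" for l
    proof -
      have ne: "Y - x l \<noteq> 0" "x l - Y \<noteq> 0" using dist[OF l] by (auto simp: Y_def)
      have "insert y S - {l} = insert y (S - {l})" using l yS by auto
      then have "ec t x (insert y S) l = (1 - t) * ((x l - t * Y) / (x l - Y) * (\<Prod>m\<in>S - {l}. (x l - t * x m) / (x l - x m)))"
        unfolding ec_def using fin yS by (simp add: Y_def)
      then have "ec t x (insert y S) l = (x l - t * Y) / (x l - Y) * c l"
        by (simp add: c_def ec_def)
      also have "\<dots> = c l - w l"
        using ne by (simp add: w_def field_simps)
      finally show ?thesis by (simp add: s_diff)
    qed
    show ?thesis using e1 e2 e3 by (simp cong: sum.cong)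
  qed
  also have "\<dots> = \<sigma> (t ^ card (insert y S)) + (\<Sum>l\<in>insert y S. \<sigma> (ec t x (insert y S) l) * u * g l)"
    using fin yS by (simp add: n_def algebra_simps)
  finally show ?thesis .
qed
end

interpretation fid: shom "\<lambda>a::'a::field. a" by unfold_locales auto

lemma pf_field:
  fixes x :: "nat \<Rightarrow> 'a::field"
  assumes "finite S" "inj_on x S"
  shows "\<forall>u. (\<forall>m\<in>S. u \<noteq> x m) \<longrightarrow>
    (\<Prod>m\<in>S. (u - t * x m) * (1 / (u - x m))) = t ^ card S + (\<Sum>l\<in>S. ec t x S l * u * (1 / (u - x l)))"
  using assms
proof (induction S rule: finite_induct)
  case empty then show ?case by simp
next
  case (insert y S)
  show ?case
  proof (intro allI impI)
    fix u assume u: "\<forall>m\<in>insert y S. u \<noteq> x m"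
    have inj: "inj_on x S" using insert.prems by auto
    have dist: "\<And>l. l \<in> S \<Longrightarrow> x l \<noteq> x y" using insert.prems insert.hyps by (auto simp: inj_on_def)
    show "(\<Prod>m\<in>insert y S. (u - t * x m) * (1 / (u - x m))) =
      t ^ card (insert y S) + (\<Sum>l\<in>insert y S. ec t x (insert y S) l * u * (1 / (u - x l)))"
    proof (rule fid.pf_step[where x=x and t=t and u=u and g="\<lambda>m. 1 / (u - x m)", OF insert.hyps(1,2) dist])
      show "(u - x y) * (1 / (u - x y)) = 1" using u by simp
      show "(u - x l) * (1 / (u - x l)) = 1" if "l \<in> S" for l using u that by simp
      show "(\<Prod>m\<in>S. (u - t * x m) * (1 / (u - x m))) = t ^ card S + (\<Sum>l\<in>S. ec t x S l * u * (1 / (u - x l)))"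
        using u insert.IH[OF inj] by blast
      have "\<forall>m\<in>S. x y \<noteq> x m" using dist by metis
      then show "(\<Prod>m\<in>S. (x y - t * x m) * (1 / (x y - x m))) = t ^ card S + (\<Sum>l\<in>S. ec t x S l * x y * (1 / (x y - x l)))"
        using insert.IH[OF inj] by blast
    qed (use dist in auto)
  qed
qed


interpretation gsh: shom "cst :: 'a::field \<Rightarrow> 'a gs"
  by unfold_locales (simp_all add: cst_add cst_mult cst_one)

lemma pf_gs:
  fixes x :: "nat \<Rightarrow> 'a::field"
  assumes v: "1 \<le> v" and fin: "finite S" and inj: "inj_on x S"
  shows "(\<Prod>m\<in>S. (U v - cst (t * x m)) * Gx v (x m)) =
    cst (t ^ card S) + (\<Sum>l\<in>S. cst (ec t x S l) * U v * Gx v (x l))"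
  using fin inj
proof (induction S rule: finite_induct)
  case empty then show ?case by (simp add: cst_one)
next
  case (insert y S)
  have inj': "inj_on x S" using insert.prems by auto
  have dist: "\<And>l. l \<in> S \<Longrightarrow> x l \<noteq> x y" using insert.prems insert.hyps by (auto simp: inj_on_def)
  have F: "(\<Prod>m\<in>S. (x y - t * x m) * (1 / (x y - x m))) = t ^ card S + (\<Sum>l\<in>S. ec t x S l * x y * (1 / (x y - x l)))"
    using pf_field[OF insert.hyps(1) inj', of t] dist by metis
  show ?case
    by (rule gsh.pf_step[where x=x and t=t and u="U v" and g="\<lambda>m. Gx v (x m)", OF insert.hyps(1,2) dist])
      (use Gx_inv[OF v] insert.IH[OF inj'] F in auto)
qed

lemma Uinv_power: "1 \<le> v \<Longrightarrow> (Uinv v :: 'a::comm_ring_1 gs) ^ p = mono (\<lambda>l. - int p * uvec v l)"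
proof (induction p)
  case 0 then show ?case by (simp add: mono_zero)
next
  case (Suc p)
  have s1: "supp_ok v (\<lambda>l. - uvec v l)" using Suc.prems by (rule supp_uvec_neg)
  have s2: "supp_ok v (\<lambda>l. - int p * uvec v l)" using Suc.prems by (auto simp: supp_ok_def uvec_def)
  have "(Uinv v :: 'a gs) ^ Suc p = Uinv v * Uinv v ^ p" by simp
  also have "\<dots> = mono (\<lambda>l. - uvec v l) * mono (\<lambda>l. - int p * uvec v l)"
    by (simp only: Suc.IH[OF Suc.prems]) (simp add: Uinv_def)
  also have "\<dots> = mono (\<lambda>l. - int (Suc p) * uvec v l)"
    by (subst mono_mult[OF s1 s2]) (simp add: algebra_simps)
  finally show ?case .
qed

lemma rep_sum: "rep (sum f A) e = (\<Sum>a\<in>A. rep (f a) e)"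
  by (induction A rule: infinite_finite_induct) (simp_all add: rep_zero rep_plus ladd_def)

context
  fixes t :: "'a::field" and x b :: "nat \<Rightarrow> 'a"
begin

definition Agen :: "nat \<Rightarrow> nat set \<Rightarrow> nat \<Rightarrow> 'a gs" where
  "Agen s S i = (\<Prod>m\<in>S. (U (s + i) - cst (t * x m)) * Gx (s + i) (x m)) *
     (\<Prod>j\<in>{1..<i}. (U (s + i) - U (s + j)) * Gu (s + i) t (s + j)) - cst (t ^ (card S - i + 1))"

definition Bgen :: "nat \<Rightarrow> (nat \<Rightarrow> nat) \<Rightarrow> nat \<Rightarrow> 'a gs" where
  "Bgen s lam i = (\<Prod>k\<in>{1..lam i}. (U (s + i) + cst (b k)) * Uinv (s + i))"

definition Wg :: "nat \<Rightarrow> nat set \<Rightarrow> (nat \<Rightarrow> nat) \<Rightarrow> nat \<Rightarrow> 'a gs" where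
  "Wg s S lam r = (\<Prod>i\<in>{1..r}. Agen s S i * Bgen s lam i)"

definition phi :: "nat \<Rightarrow> 'a \<Rightarrow> 'a" where
  "phi p y = (\<Prod>k\<in>{1..p}. (y + b k))"

fun HPS :: "nat \<Rightarrow> (nat \<Rightarrow> nat) \<Rightarrow> nat set \<Rightarrow> 'a" where
  "HPS 0 lam S = 1"
| "HPS (Suc r) lam S = (\<Sum>l\<in>S. phi (lam 1) (x l) * (\<Prod>m\<in>S - {l}. (x l - t * x m) / (x l - x m)) *
      HPS r (\<lambda>i. lam (Suc i)) (S - {l}))"

definition tgt :: "nat \<Rightarrow> nat \<Rightarrow> (nat \<Rightarrow> nat) \<Rightarrow> nat \<Rightarrow> int" where
  "tgt s r lam = (\<lambda>l. if s < l \<and> l \<le> s + r then - int (lam (l - s)) else 0)"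

lemma Agen1:
  assumes fin: "finite S" and inj: "inj_on x S" and c: "1 \<le> card S"
  shows "Agen s S 1 = (\<Sum>l\<in>S. cst (ec t x S l) * (U (Suc s) * Gx (Suc s) (x l)))"
proof -
  have "Agen s S 1 = (\<Prod>m\<in>S. (U (Suc s) - cst (t * x m)) * Gx (Suc s) (x m)) - cst (t ^ card S)"
    using c by (simp add: Agen_def)
  also have "\<dots> = (\<Sum>l\<in>S. cst (ec t x S l) * U (Suc s) * Gx (Suc s) (x l))"
    by (simp add: pf_gs[OF _ fin inj])
  finally show ?thesis by (simp add: mult.assoc)
qed

lemma Bgen1: "Bgen s lam 1 = (\<Prod>k\<in>{1..lam 1}. U (Suc s) + cst (b k)) * Uinv (Suc s) ^ lam 1"
  by (simp add: Bgen_def prod.distrib)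

lemma Wg_Suc: "Wg s S lam (Suc r) = (Agen s S 1 * Bgen s lam 1) * (\<Prod>i\<in>{1..r}. Agen s S (Suc i) * Bgen s lam (Suc i))"
proof -
  have "{1..Suc r} = insert 1 {Suc 1..Suc r}" by auto
  then have "Wg s S lam (Suc r) = (Agen s S 1 * Bgen s lam 1) * (\<Prod>i\<in>{Suc 1..Suc r}. Agen s S i * Bgen s lam i)"
    by (simp add: Wg_def)
  also have "(\<Prod>i\<in>{Suc 1..Suc r}. Agen s S i * Bgen s lam i) = (\<Prod>i\<in>{1..r}. Agen s S (Suc i) * Bgen s lam (Suc i))"
    by (rule prod.shift_bounds_cl_Suc_ivl)
  finally show ?thesis .
qed

lemma cgr_Phi:
  "cgr (Suc s) (x l) (\<Prod>k\<in>{1..p}. U (Suc s) + cst (b k)) (cst (phi p (x l)))"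
proof -
  have "cgr (Suc s) (x l) (\<Prod>k\<in>{1..p}. U (Suc s) + cst (b k)) (\<Prod>k\<in>{1..p}. cst (x l) + cst (b k))"
    by (rule cgr_prod) (auto intro!: cgr_add cgr_Uv cgr_refl vfree_cst)
  moreover have "(\<Prod>k\<in>{1..p}. cst (x l) + cst (b k)) = cst (phi p (x l))"
    by (simp add: phi_def cst_prod cst_add)
  ultimately show ?thesis by simp
qed

lemma vfree_Bgen: "1 \<le> i \<Longrightarrow> vfree (Suc s) (Bgen (Suc s) lam i)"
  unfolding Bgen_def
  by (intro vfree_prod vfree_mult vfree_add vfree_U vfree_cst vfree_Uinv) auto

lemma cgr_factor:
  assumes i: "1 \<le> i" and l: "l \<in> S" and fin: "finite S"
  shows "cgr (Suc s) (x l) (Agen s S (Suc i) * Bgen s lam (Suc i))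
     (Agen (Suc s) (S - {l}) i * Bgen (Suc s) (\<lambda>i. lam (Suc i)) i)"
proof -
  define v where "v = Suc s"
  define w where "w = Suc s + i"
  have w: "s + Suc i = w" "Suc s + i = w" by (simp_all add: w_def)
  have v1: "1 \<le> v" and vw: "v < w" using i by (simp_all add: v_def w_def)
  define f where "f m = (U w - cst (t * x m)) * Gx w (x m)" for m
  define g where "g j = (U w - U (Suc s + j)) * Gu w t (Suc s + j)" for j
  define P1 where "P1 = (\<Prod>m\<in>S - {l}. f m)"
  define P2 where "P2 = (\<Prod>j\<in>{1..<i}. g j)"
  have B: "Bgen s lam (Suc i) = Bgen (Suc s) (\<lambda>i. lam (Suc i)) i"
    by (simp add: Bgen_def w)
  have A1: "Agen s S (Suc i) = (f l * ((U w - U v) * Gu w t v)) * (P1 * P2) - cst (t ^ (card S - Suc i + 1))"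
  proof -
    have "(\<Prod>m\<in>S. (U (s + Suc i) - cst (t * x m)) * Gx (s + Suc i) (x m)) = f l * P1"
      unfolding P1_def f_def w using fin l by (simp add: prod.remove)
    moreover have "{1..<Suc i} = insert 1 {Suc 1..<Suc i}" using i by auto
    then have "(\<Prod>j\<in>{1..<Suc i}. (U (s + Suc i) - U (s + j)) * Gu (s + Suc i) t (s + j)) =
        ((U w - U v) * Gu w t v) * (\<Prod>j\<in>{Suc 1..<Suc i}. (U w - U (s + j)) * Gu w t (s + j))"
      by (simp add: w_def v_def)
    moreover have "(\<Prod>j\<in>{Suc 1..<Suc i}. (U w - U (s + j)) * Gu w t (s + j)) = P2"
      unfolding P2_def g_def by (subst prod.shift_bounds_Suc_ivl) simp
    ultimately show ?thesis by (simp add: Agen_def mult_ac)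
  qed
  have A2: "Agen (Suc s) (S - {l}) i = P1 * P2 - cst (t ^ (card S - Suc i + 1))"
  proof -
    have "card (S - {l}) - i + 1 = card S - Suc i + 1" using fin l by (simp add: card_Diff_singleton)
    then show ?thesis by (simp add: Agen_def P1_def P2_def f_def g_def w_def)
  qed
  have one: "f l * ((U w - cst (x l)) * Gx w (t * x l)) = 1"
  proof -
    have w1: "1 \<le> w" using vw v1 by simp
    have "f l * ((U w - cst (x l)) * Gx w (t * x l)) = ((U w - cst (t * x l)) * Gx w (t * x l)) * ((U w - cst (x l)) * Gx w (x l))"
      by (simp add: f_def mult_ac)
    then show ?thesis by (simp add: Gx_inv[OF w1])
  qed
  have c1: "cgr v (x l) ((U w - U v) * Gu w t v) ((U w - cst (x l)) * Gx w (t * x l))"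
    by (rule cgr_mult[OF v1], rule cgr_diff, rule cgr_refl, rule vfree_U)
      (use vw v1 in \<open>auto intro: cgr_Uv cgr_Gu\<close>)
  have fvf: "vfree v (f m)" for m
    unfolding f_def by (intro vfree_mult vfree_diff vfree_U vfree_cst vfree_Gx) (use vw v1 in auto)
  have gvf: "vfree v (g j)" if "j \<in> {1..<i}" for j
    unfolding g_def using that vw v1
    by (intro vfree_mult vfree_diff vfree_U vfree_Gu) (auto simp: v_def w_def)
  have vP: "vfree v (P1 * P2)"
    unfolding P1_def P2_def using fin by (intro vfree_mult vfree_prod fvf gvf) auto
  have c2: "cgr v (x l) (Agen s S (Suc i)) (Agen (Suc s) (S - {l}) i)"
  proof -
    have "cgr v (x l) ((f l * ((U w - U v) * Gu w t v)) * (P1 * P2) - cst (t ^ (card S - Suc i + 1)))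
       ((f l * ((U w - cst (x l)) * Gx w (t * x l))) * (P1 * P2) - cst (t ^ (card S - Suc i + 1)))"
      by (intro cgr_diff cgr_mult[OF v1] c1 cgr_refl fvf vP vfree_cst)
    then show ?thesis by (simp add: A1 A2 one)
  qed
  have c3: "cgr v (x l) (Bgen s lam (Suc i)) (Bgen (Suc s) (\<lambda>i. lam (Suc i)) i)"
    unfolding B v_def by (rule cgr_refl, rule vfree_Bgen[OF i])
  show ?thesis using cgr_mult[OF v1 c2 c3] by (simp add: v_def)
qed

lemma main_ind:
  "finite S \<Longrightarrow> inj_on x S \<Longrightarrow> r \<le> card S \<Longrightarrow>
   rep (Wg s S lam r) (tgt s r lam) = (1 - t) ^ r * HPS r lam S"
proof (induction r arbitrary: s S lam)
  case 0
  have "tgt s 0 lam = (\<lambda>_. 0)" by (rule ext) (simp add: tgt_def)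
  then show ?case by (simp add: Wg_def rep_one lconst_def)
next
  case (Suc r)
  note fin = Suc.prems(1) and inj = Suc.prems(2) and rc = Suc.prems(3)
  define v where "v = Suc s"
  have v1: "1 \<le> v" by (simp add: v_def)
  define p where "p = lam 1"
  define lam' where "lam' = (\<lambda>i. lam (Suc i))"
  define Phi where "Phi = (\<Prod>k\<in>{1..p}. U v + cst (b k))"
  define R where "R = (\<Prod>i\<in>{1..r}. Agen s S (Suc i) * Bgen s lam (Suc i))"
  define e where "e = tgt s (Suc r) lam"
  define e' where "e' = (\<lambda>l. e l - (- int p * uvec v l))"
  have c1: "1 \<le> card S" using rc by simp
  have sd: "supp_ok v (\<lambda>l. - int p * uvec v l)" by (auto simp: supp_ok_def uvec_def v_def)
  have e'v: "e' v = 0" by (simp add: e'_def e_def tgt_def v_def uvec_def p_def)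
  have e'eq: "e' = tgt (Suc s) r lam'"
  proof (rule ext)
    fix l show "e' l = tgt (Suc s) r lam' l"
      by (cases "l = Suc s") (auto simp: e'_def e_def tgt_def v_def uvec_def p_def lam'_def Suc_diff_Suc)
  qed
  have "Wg s S lam (Suc r) = (\<Sum>l\<in>S. cst (ec t x S l) * (U v * Gx v (x l))) * (Phi * Uinv v ^ p) * R"
    unfolding Wg_Suc Agen1[OF fin inj c1] Bgen1 by (simp add: R_def Phi_def p_def v_def)
  also have "\<dots> = (\<Sum>l\<in>S. cst (ec t x S l) * (U v * Gx v (x l)) * (Phi * Uinv v ^ p) * R)"
    by (simp add: sum_distrib_right)
  also have "\<dots> = (\<Sum>l\<in>S. cst (ec t x S l) * (Uinv v ^ p * (U v * Gx v (x l) * (Phi * R))))"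
    by (rule sum.cong) (simp_all add: mult_ac)
  finally have W: "Wg s S lam (Suc r) = (\<Sum>l\<in>S. cst (ec t x S l) * (mono (\<lambda>l. - int p * uvec v l) * (U v * Gx v (x l) * (Phi * R))))"
    by (simp only: Uinv_power[OF v1])
  have tm: "rep (mono (\<lambda>l. - int p * uvec v l) * (U v * Gx v (x l) * (Phi * R))) e
      = phi p (x l) * ((1 - t) ^ r * HPS r lam' (S - {l}))" if l: "l \<in> S" for l
  proof -
    have "rep (mono (\<lambda>l. - int p * uvec v l) * (U v * Gx v (x l) * (Phi * R))) e = rep (U v * Gx v (x l) * (Phi * R)) e'"
      unfolding e'_def by (rule rep_mono_mult[OF sd])
    also have "\<dots> = rep (cst (phi p (x l)) * Wg (Suc s) (S - {l}) lam' r) e'"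
    proof (rule ct_lemma[where v=v and e=e' and x="x l", OF v1 _ e'v])
      show "cgr v (x l) (Phi * R) (cst (phi p (x l)) * Wg (Suc s) (S - {l}) lam' r)"
        unfolding Wg_def R_def Phi_def v_def lam'_def
        by (rule cgr_mult, simp, rule cgr_Phi, rule cgr_prod) (use cgr_factor[OF _ l fin] in auto)
    qed
    also have "\<dots> = phi p (x l) * rep (Wg (Suc s) (S - {l}) lam' r) (tgt (Suc s) r lam')"
      by (simp add: rep_cst_mult e'eq)
    also have "\<dots> = phi p (x l) * ((1 - t) ^ r * HPS r lam' (S - {l}))"
    proof -
      have "r \<le> card (S - {l})" using rc fin l by (simp add: card_Diff_singleton)
      moreover have "inj_on x (S - {l})" using inj by (rule inj_on_subset) auto
      ultimately show ?thesis using Suc.IH[of "S - {l}"] fin by simp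
    qed
    finally show ?thesis .
  qed
  have "rep (Wg s S lam (Suc r)) e = (\<Sum>l\<in>S. ec t x S l * (phi p (x l) * ((1 - t) ^ r * HPS r lam' (S - {l}))))"
    unfolding W rep_sum by (rule sum.cong, simp, simp only: rep_cst_mult tm)
  also have "\<dots> = (1 - t) ^ Suc r * HPS (Suc r) lam S"
    by (simp add: ec_def sum_distrib_left p_def lam'_def mult_ac)
  finally show ?case by (simp add: e_def)
qed

end


lemma lprod_cong: "(\<And>i. i \<in> set is \<Longrightarrow> F i = G i) \<Longrightarrow> lprod F is = lprod G is"
  by (induction "is") (simp_all add: lprod_def)

lemma lprod_rep: "lprod (\<lambda>i. rep (F i)) is = rep (prod_list (map F is))"
  by (induction "is") (simp_all add: lprod_def rep_one rep_times)

lemma prod_list_upt: "prod_list (map f [a..<b]) = (\<Prod>i\<in>{a..<b}. f i)"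
  by (induction b) (auto simp: atLeastLessThanSuc mult.commute)

lemma lprod_rep_set: "(\<And>i. i \<in> {a..<b} \<Longrightarrow> F i = rep (G i)) \<Longrightarrow> lprod F [a..<b] = rep (\<Prod>i\<in>{a..<b}. G i)"
proof -
  assume h: "\<And>i. i \<in> {a..<b} \<Longrightarrow> F i = rep (G i)"
  have "lprod F [a..<b] = lprod (\<lambda>i. rep (G i)) [a..<b]" by (rule lprod_cong) (use h in auto)
  then show ?thesis by (simp add: lprod_rep prod_list_upt)
qed

lemma genser_eq:
  fixes x b :: "nat \<Rightarrow> 'a::field"
  shows "HP_genser n r lam x t b e = (1 / (1 - t) ^ r) * rep (Wg t x b 0 {1..n} lam r) e"
proof -
  have A: "lprod (\<lambda>i.
             lsub
               (lmult
                 (lprod (\<lambda>j. lmult (lsub (uvar i) (lconst (t * x j)))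
                                     (lgeom (uvec i) (x j) (\<lambda>_. 0))) [1..<n+1])
                 (lprod (\<lambda>j. lmult (lsub (uvar i) (uvar j))
                                     (lgeom (uvec i) t (uvec j))) [1..<i]))
               (lconst (t ^ (n - i + 1)))) [1..<r+1] = rep (\<Prod>i\<in>{1..<r+1}. Agen t x 0 {1..n} i)"
  proof (rule lprod_rep_set)
    fix i assume "i \<in> {1..<r+1}"
    then have i: "1 \<le> i" by simp
    have j1: "lprod (\<lambda>j. lmult (lsub (uvar i) (lconst (t * x j))) (lgeom (uvec i) (x j) (\<lambda>_. 0))) [1..<n+1]
        = rep (\<Prod>j\<in>{1..<n+1}. (U i - cst (t * x j)) * Gx i (x j))"
      by (rule lprod_rep_set) (simp add: rep_times rep_minus rep_U[OF i] rep_cst rep_Gx[OF i])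
    have j2: "lprod (\<lambda>j. lmult (lsub (uvar i) (uvar j)) (lgeom (uvec i) t (uvec j))) [1..<i]
        = rep (\<Prod>j\<in>{1..<i}. (U i - U j) * Gu i t j)"
      by (rule lprod_rep_set) (simp add: rep_times rep_minus rep_U[OF i] rep_U rep_Gu)
    have "{1..<n+1} = {1..n}" by auto
    then show "lsub (lmult (lprod (\<lambda>j. lmult (lsub (uvar i) (lconst (t * x j))) (lgeom (uvec i) (x j) (\<lambda>_. 0))) [1..<n+1])
               (lprod (\<lambda>j. lmult (lsub (uvar i) (uvar j)) (lgeom (uvec i) t (uvec j))) [1..<i]))
         (lconst (t ^ (n - i + 1))) = rep (Agen t x 0 {1..n} i)"
      unfolding j1 j2 by (simp add: Agen_def rep_minus rep_times rep_cst)
  qed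
  have B: "lprod (\<lambda>i. lprod (\<lambda>k. lmult (ladd (uvar i) (lconst (b k)))
                                        (lmono (\<lambda>l. - uvec i l))) [1..<lam i + 1]) [1..<r+1]
     = rep (\<Prod>i\<in>{1..<r+1}. Bgen b 0 lam i)"
  proof (rule lprod_rep_set)
    fix i assume "i \<in> {1..<r+1}"
    then have i: "1 \<le> i" by simp
    have "lprod (\<lambda>k. lmult (ladd (uvar i) (lconst (b k))) (lmono (\<lambda>l. - uvec i l))) [1..<lam i + 1]
       = rep (\<Prod>k\<in>{1..<lam i + 1}. (U i + cst (b k)) * Uinv i)"
      by (rule lprod_rep_set) (simp add: rep_times rep_plus rep_U[OF i] rep_cst rep_Uinv[OF i])
    moreover have eqs: "{1..<lam i + 1} = {1..lam i}" by auto
    have "Bgen b 0 lam i = (\<Prod>k\<in>{1..<lam i + 1}. (U i + cst (b k)) * Uinv i)"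
      by (simp only: Bgen_def eqs add_0)
    ultimately show "lprod (\<lambda>k. lmult (ladd (uvar i) (lconst (b k))) (lmono (\<lambda>l. - uvec i l))) [1..<lam i + 1]
       = rep (Bgen b 0 lam i)" by simp
  qed
  have "{1..<r+1} = {1..r}" by auto
  then have "Wg t x b 0 {1..n} lam r = (\<Prod>i\<in>{1..<r+1}. Agen t x 0 {1..n} i) * (\<Prod>i\<in>{1..<r+1}. Bgen b 0 lam i)"
    by (simp add: Wg_def prod.distrib)
  then show ?thesis
    unfolding HP_genser_def lscale_def A B by (simp add: rep_times)
qed


definition Inj :: "nat \<Rightarrow> nat set \<Rightarrow> nat list set" where
  "Inj r S = {s. distinct s \<and> length s = r \<and> set s \<subseteq> S}"

lemma finite_Inj: "finite S \<Longrightarrow> finite (Inj r S)"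
  unfolding Inj_def by (rule finite_subset[OF _ finite_lists_length_eq[of S r]]) auto

lemma Inj_0: "Inj 0 S = {[]}" by (auto simp: Inj_def)

lemma Inj_Suc: "Inj (Suc r) S = (\<Union>a\<in>S. (\<lambda>s. a # s) ` Inj r (S - {a}))"
proof (rule set_eqI)
  fix s
  show "s \<in> Inj (Suc r) S \<longleftrightarrow> s \<in> (\<Union>a\<in>S. (\<lambda>s. a # s) ` Inj r (S - {a}))"
  proof (cases s)
    case Nil then show ?thesis by (auto simp: Inj_def)
  next
    case (Cons a s') then show ?thesis by (auto simp: Inj_def)
  qed
qed

context
  fixes t :: "'a::field" and x b :: "nat \<Rightarrow> 'a"
begin

fun TT :: "(nat \<Rightarrow> nat) \<Rightarrow> nat set \<Rightarrow> nat list \<Rightarrow> 'a" where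
  "TT lam S [] = 1"
| "TT lam S (a # s) = phi b (lam 1) (x a) * (\<Prod>m\<in>S - {a}. (x a - t * x m) / (x a - x m)) *
     TT (\<lambda>i. lam (Suc i)) (S - {a}) s"

lemma HPS_Inj: "finite S \<Longrightarrow> HPS t x b r lam S = (\<Sum>s\<in>Inj r S. TT lam S s)"
proof (induction r arbitrary: lam S)
  case 0 then show ?case by (simp add: Inj_0)
next
  case (Suc r)
  have "(\<Sum>s\<in>Inj (Suc r) S. TT lam S s) = (\<Sum>a\<in>S. \<Sum>s\<in>(\<lambda>s. a # s) ` Inj r (S - {a}). TT lam S s)"
    unfolding Inj_Suc
    by (rule sum.UNION_disjoint) (auto simp: Suc.prems finite_Inj)
  also have "\<dots> = (\<Sum>a\<in>S. \<Sum>s\<in>Inj r (S - {a}). TT lam S (a # s))"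
    by (rule sum.cong, simp, subst sum.reindex) (auto simp: inj_on_def)
  also have "\<dots> = (\<Sum>a\<in>S. phi b (lam 1) (x a) * (\<Prod>m\<in>S - {a}. (x a - t * x m) / (x a - x m)) *
      HPS t x b r (\<lambda>i. lam (Suc i)) (S - {a}))"
    by (rule sum.cong, simp) (simp add: Suc.IH Suc.prems sum_distrib_left)
  finally show ?case by simp
qed

lemma TT_map:
  assumes w: "w permutes {1..n}" and rn: "r \<le> n"
  shows "\<forall>a. r + 1 - a = k \<longrightarrow> 1 \<le> a \<longrightarrow> a \<le> r + 1 \<longrightarrow>
    TT (\<lambda>i. lam (i + a - 1)) ({1..n} - w ` {1..<a}) (map w [a..<r+1]) =
    (\<Prod>i\<in>{a..r}. phi b (lam i) (x (w i)) * (\<Prod>j\<in>{i+1..n}. (x (w i) - t * x (w j)) / (x (w i) - x (w j))))"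
proof (induction k)
  case 0
  show ?case
  proof (intro allI impI)
    fix a assume "r + 1 - a = 0" "1 \<le> a" "a \<le> r + 1"
    then have "a = r + 1" by simp
    then show "TT (\<lambda>i. lam (i + a - 1)) ({1..n} - w ` {1..<a}) (map w [a..<r+1]) =
      (\<Prod>i\<in>{a..r}. phi b (lam i) (x (w i)) * (\<Prod>j\<in>{i+1..n}. (x (w i) - t * x (w j)) / (x (w i) - x (w j))))"
      by simp
  qed
next
  case (Suc k)
  show ?case
  proof (intro allI impI)
    fix a assume k: "r + 1 - a = Suc k" and a1: "1 \<le> a" and ar: "a \<le> r + 1"
    have ar': "a \<le> r" using k by simp
    have an: "a \<le> n" using ar' rn by simp
    have upt: "[a..<r+1] = a # [Suc a..<r+1]" using ar' by (simp add: upt_conv_Cons)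
    have lamf: "(\<lambda>i. (\<lambda>i. lam (i + a - 1)) (Suc i)) = (\<lambda>i. lam (i + Suc a - 1))"
      using a1 by (intro ext) simp
    have Sset: "{1..n} - w ` {1..<a} - {w a} = {1..n} - w ` {1..<Suc a}"
    proof -
      have "{1..<Suc a} = insert a {1..<a}" using a1 by auto
      then show ?thesis by auto
    qed
    have img: "{1..n} - w ` {1..<Suc a} = w ` {a+1..n}"
    proof -
      have "w ` {1..n} = {1..n}" by (rule permutes_image[OF w])
      moreover have "w ` {1..n} - w ` {1..<Suc a} = w ` ({1..n} - {1..<Suc a})"
        by (rule image_set_diff[OF permutes_inj[OF w], symmetric])
      moreover have "{1..n} - {1..<Suc a} = {a+1..n}" by auto
      ultimately show ?thesis by simp
    qed
    have P: "(\<Prod>m\<in>{1..n} - w ` {1..<Suc a}. (x (w a) - t * x m) / (x (w a) - x m)) =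
        (\<Prod>j\<in>{a+1..n}. (x (w a) - t * x (w j)) / (x (w a) - x (w j)))"
      unfolding img by (subst prod.reindex[OF permutes_inj_on[OF w]]) simp
    have IH: "TT (\<lambda>i. lam (i + Suc a - 1)) ({1..n} - w ` {1..<Suc a}) (map w [Suc a..<r+1]) =
      (\<Prod>i\<in>{Suc a..r}. phi b (lam i) (x (w i)) * (\<Prod>j\<in>{i+1..n}. (x (w i) - t * x (w j)) / (x (w i) - x (w j))))"
      by (rule Suc.IH[rule_format]) (use k ar' in auto)
    have split: "{a..r} = insert a {Suc a..r}" using ar' by auto
    show "TT (\<lambda>i. lam (i + a - 1)) ({1..n} - w ` {1..<a}) (map w [a..<r+1]) =
      (\<Prod>i\<in>{a..r}. phi b (lam i) (x (w i)) * (\<Prod>j\<in>{i+1..n}. (x (w i) - t * x (w j)) / (x (w i) - x (w j))))"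
    proof -
      have "TT (\<lambda>i. lam (i + a - 1)) ({1..n} - w ` {1..<a}) (map w [a..<r+1]) =
        phi b (lam (1 + a - 1)) (x (w a)) * (\<Prod>m\<in>{1..n} - w ` {1..<a} - {w a}. (x (w a) - t * x m) / (x (w a) - x m)) *
        TT (\<lambda>i. (\<lambda>i. lam (i + a - 1)) (Suc i)) ({1..n} - w ` {1..<a} - {w a}) (map w [Suc a..<r+1])"
        unfolding upt by (simp only: list.map TT.simps)
      also have "\<dots> = phi b (lam a) (x (w a)) * (\<Prod>j\<in>{a+1..n}. (x (w a) - t * x (w j)) / (x (w a) - x (w j))) *
        (\<Prod>i\<in>{Suc a..r}. phi b (lam i) (x (w i)) * (\<Prod>j\<in>{i+1..n}. (x (w i) - t * x (w j)) / (x (w i) - x (w j))))"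
        by (simp only: lamf Sset P IH add_diff_cancel_left')
      also have "\<dots> = (\<Prod>i\<in>{a..r}. phi b (lam i) (x (w i)) * (\<Prod>j\<in>{i+1..n}. (x (w i) - t * x (w j)) / (x (w i) - x (w j))))"
        unfolding split by (subst prod.insert) (auto simp: mult.assoc)
      finally show ?thesis .
    qed
  qed
qed

lemma summand_TT:
  assumes w: "w permutes {1..n}" and rn: "r \<le> n"
  shows "HP_summand n r lam (x \<circ> w) t b = TT lam {1..n} (map w [1..<r+1])"
proof -
  have "TT (\<lambda>i. lam (i + 1 - 1)) ({1..n} - w ` {1..<1}) (map w [1..<r+1]) =
    (\<Prod>i\<in>{1..r}. phi b (lam i) (x (w i)) * (\<Prod>j\<in>{i+1..n}. (x (w i) - t * x (w j)) / (x (w i) - x (w j))))"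
    by (rule TT_map[OF w rn, where k=r and lam=lam, rule_format]) auto
  then show ?thesis by (simp add: HP_summand_def phi_def prod.distrib)
qed

end

lemma young_id: "id \<in> young_sub n r"
  by (simp add: young_sub_def permutes_id)

lemma young_comp: "h1 \<in> young_sub n r \<Longrightarrow> h2 \<in> young_sub n r \<Longrightarrow> h1 \<circ> h2 \<in> young_sub n r"
  by (simp add: young_sub_def permutes_compose)

lemma young_inv: "h \<in> young_sub n r \<Longrightarrow> inv h \<in> young_sub n r"
proof -
  assume h: "h \<in> young_sub n r"
  then have p: "h permutes {1..n}" by (simp add: young_sub_def)
  have "inv h i = i" if "i \<in> {1..r}" for i
    using h that by (simp add: young_sub_def permutes_inv_eq[OF p])
  then show ?thesis using permutes_inv[OF p] by (simp add: young_sub_def)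
qed

lemma coset_shift:
  assumes h0: "h0 \<in> young_sub n r"
  shows "(\<lambda>h. (w \<circ> h0) \<circ> h) ` young_sub n r = (\<lambda>h. w \<circ> h) ` young_sub n r"
proof
  show "(\<lambda>h. (w \<circ> h0) \<circ> h) ` young_sub n r \<subseteq> (\<lambda>h. w \<circ> h) ` young_sub n r"
  proof
    fix g assume "g \<in> (\<lambda>h. (w \<circ> h0) \<circ> h) ` young_sub n r"
    then obtain h where h: "h \<in> young_sub n r" and g: "g = (w \<circ> h0) \<circ> h" by blast
    have "g = w \<circ> (h0 \<circ> h)" by (rule ext) (simp add: g)
    then show "g \<in> (\<lambda>h. w \<circ> h) ` young_sub n r" using young_comp[OF h0 h] by blast
  qed
next
  have p: "h0 permutes {1..n}" using h0 by (simp add: young_sub_def)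
  show "(\<lambda>h. w \<circ> h) ` young_sub n r \<subseteq> (\<lambda>h. (w \<circ> h0) \<circ> h) ` young_sub n r"
  proof
    fix g assume "g \<in> (\<lambda>h. w \<circ> h) ` young_sub n r"
    then obtain h where h: "h \<in> young_sub n r" and g: "g = w \<circ> h" by blast
    have "g = (w \<circ> h0) \<circ> (inv h0 \<circ> h)"
      by (rule ext) (simp add: g permutes_inverses(1)[OF p])
    moreover have "inv h0 \<circ> h \<in> young_sub n r" by (rule young_comp[OF young_inv[OF h0] h])
    ultimately show "g \<in> (\<lambda>h. (w \<circ> h0) \<circ> h) ` young_sub n r" by blast
  qed
qed

lemma coset_rep:
  assumes C: "C \<in> cosets_Sn n r"
  shows "(SOME w. w \<in> C) permutes {1..n}" and "C = (\<lambda>h. (SOME w. w \<in> C) \<circ> h) ` young_sub n r"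
    and "\<exists>w h0. w permutes {1..n} \<and> h0 \<in> young_sub n r \<and> (SOME w. w \<in> C) = w \<circ> h0 \<and> C = (\<lambda>h. w \<circ> h) ` young_sub n r"
proof -
  obtain w where w: "w permutes {1..n}" and Cw: "C = (\<lambda>h. w \<circ> h) ` young_sub n r"
    using C by (auto simp: cosets_Sn_def)
  have "w \<in> C" unfolding Cw by (rule image_eqI[of _ _ id]) (simp_all add: young_id)
  then have "(SOME w. w \<in> C) \<in> C" by (rule someI[of "\<lambda>w. w \<in> C"])
  then obtain h0 where h0: "h0 \<in> young_sub n r" and eq: "(SOME w. w \<in> C) = w \<circ> h0" using Cw by blast
  show "(SOME w. w \<in> C) permutes {1..n}" using eq permutes_compose[of h0 "{1..n}" w] h0 w
    by (simp add: young_sub_def)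
  have "(\<lambda>h. (SOME w. w \<in> C) \<circ> h) ` young_sub n r = (\<lambda>h. (w \<circ> h0) \<circ> h) ` young_sub n r"
    by (simp only: eq)
  also have "\<dots> = C" by (simp only: coset_shift[OF h0] Cw)
  finally show "C = (\<lambda>h. (SOME w. w \<in> C) \<circ> h) ` young_sub n r" by simp
  show "\<exists>w h0. w permutes {1..n} \<and> h0 \<in> young_sub n r \<and> (SOME w. w \<in> C) = w \<circ> h0 \<and> C = (\<lambda>h. w \<circ> h) ` young_sub n r"
    using w h0 eq Cw by blast
qed


lemma perm_extend:
  assumes ds: "distinct s" and ls: "length s = r" and ss: "set s \<subseteq> {1..n}" and rn: "r \<le> n"
  shows "\<exists>w. w permutes {1..n} \<and> map w [1..<r+1] = s"
proof -
  define A where "A = {r+1..n}"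
  define B where "B = {1..n} - set s"
  have cA: "card A = n - r" by (simp add: A_def)
  have "card (set s) = r" using ds ls by (simp add: distinct_card)
  then have cB: "card B = n - r" using ss by (simp add: B_def card_Diff_subset)
  obtain g where g: "bij_betw g A B"
    using finite_same_card_bij[of A B] cA cB by (auto simp: A_def B_def)
  define w where "w i = (if i \<in> {1..r} then s ! (i - 1) else if i \<in> A then g i else i)" for i
  have b1: "bij_betw w {1..r} (set s)"
  proof (rule bij_betw_imageI)
    show "inj_on w {1..r}"
    proof (rule inj_onI)
      fix i j assume i: "i \<in> {1..r}" and j: "j \<in> {1..r}" and e: "w i = w j"
      then have "s ! (i - 1) = s ! (j - 1)" by (simp add: w_def)
      then have "i - 1 = j - 1" using nth_eq_iff_index_eq[OF ds, of "i - 1" "j - 1"] i j ls by auto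
      moreover have "1 \<le> i" "1 \<le> j" using i j by auto
      ultimately show "i = j" by arith
    qed
    have sub: "w ` {1..r} \<subseteq> set s" using ls by (auto simp: w_def)
    moreover have "card (w ` {1..r}) = card (set s)"
      using card_image[OF \<open>inj_on w {1..r}\<close>] \<open>card (set s) = r\<close> by simp
    ultimately show "w ` {1..r} = set s" by (simp add: card_subset_eq)
  qed
  have b2: "bij_betw w A B"
    by (rule bij_betw_cong[THEN iffD1, OF _ g]) (auto simp: w_def A_def)
  have "bij_betw w ({1..r} \<union> A) (set s \<union> B)"
    by (rule bij_betw_combine[OF b1 b2]) (auto simp: B_def)
  moreover have "{1..r} \<union> A = {1..n}" using rn by (auto simp: A_def)
  moreover have "set s \<union> B = {1..n}" using ss by (auto simp: B_def)
  ultimately have bw: "bij_betw w {1..n} {1..n}" by simp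
  have "w permutes {1..n}"
    by (rule bij_imp_permutes[OF bw]) (use rn in \<open>auto simp: w_def A_def\<close>)
  moreover have "map w [1..<r+1] = s"
  proof (rule nth_equalityI)
    show "length (map w [1..<r+1]) = length s" using ls by (simp del: upt_Suc)
    fix k assume "k < length (map w [1..<r+1])"
    then have k: "k < r" by (simp del: upt_Suc)
    have "map w [1..<r+1] ! k = w (1 + k)" using k by (simp del: upt_Suc)
    also have "\<dots> = s ! k" using k by (simp add: w_def)
    finally show "map w [1..<r+1] ! k = s ! k" .
  qed
  ultimately show ?thesis by blast
qed

lemma some_in_coset:
  assumes C: "C = (\<lambda>h. w \<circ> h) ` young_sub n r"
  shows "\<exists>h\<in>young_sub n r. (SOME w. w \<in> C) = w \<circ> h"
proof -
  have "w \<in> C" unfolding C by (rule image_eqI[of _ _ id]) (simp_all add: young_id)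
  then have "(SOME w. w \<in> C) \<in> C" by (rule someI[of "\<lambda>w. w \<in> C"])
  then show ?thesis using C by blast
qed

lemma map_rep_coset:
  assumes C: "C = (\<lambda>h. w \<circ> h) ` young_sub n r"
  shows "map (SOME w. w \<in> C) [1..<r+1] = map w [1..<r+1]"
proof -
  obtain h where h: "h \<in> young_sub n r" and e: "(SOME w. w \<in> C) = w \<circ> h" using some_in_coset[OF C] by blast
  show ?thesis by (rule map_cong[OF refl]) (use h in \<open>auto simp: e young_sub_def\<close>)
qed

lemma cosets_bij:
  assumes rn: "r \<le> n"
  shows "bij_betw (\<lambda>C. map (SOME w. w \<in> C) [1..<r+1]) (cosets_Sn n r) (Inj r {1..n})"
proof (rule bij_betw_imageI)
  show "inj_on (\<lambda>C. map (SOME w. w \<in> C) [1..<r+1]) (cosets_Sn n r)"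
  proof (rule inj_onI)
    fix C1 C2 assume C1: "C1 \<in> cosets_Sn n r" and C2: "C2 \<in> cosets_Sn n r"
      and e: "map (SOME w. w \<in> C1) [1..<r+1] = map (SOME w. w \<in> C2) [1..<r+1]"
    define w1 where "w1 = (SOME w. w \<in> C1)"
    define w2 where "w2 = (SOME w. w \<in> C2)"
    have p1: "w1 permutes {1..n}" and E1: "C1 = (\<lambda>h. w1 \<circ> h) ` young_sub n r"
      using coset_rep(1,2)[OF C1] by (simp_all add: w1_def)
    have p2: "w2 permutes {1..n}" and E2: "C2 = (\<lambda>h. w2 \<circ> h) ` young_sub n r"
      using coset_rep(1,2)[OF C2] by (simp_all add: w1_def w2_def)
    have A: "\<forall>z\<in>set [1..<r+1]. w1 z = w2 z" using e by (simp only: map_eq_conv w1_def w2_def)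
    have agree: "w2 i = w1 i" if "i \<in> {1..r}" for i
    proof -
      have "i \<in> set [1..<r+1]" using that by auto
      then have "w1 i = w2 i" using A by blast
      then show ?thesis by simp
    qed
    define h0 where "h0 = inv w1 \<circ> w2"
    have hp: "h0 permutes {1..n}" unfolding h0_def by (rule permutes_compose[OF p2 permutes_inv[OF p1]])
    have hf: "\<forall>i\<in>{1..r}. h0 i = i"
    proof
      fix i assume "i \<in> {1..r}"
      then have "w2 i = w1 i" by (rule agree)
      then show "h0 i = i" by (simp add: h0_def permutes_inverses(2)[OF p1])
    qed
    have h0: "h0 \<in> young_sub n r" using hp hf by (simp add: young_sub_def)
    have "w2 = w1 \<circ> h0" by (rule ext) (simp add: h0_def permutes_inverses(1)[OF p1])
    then have "C2 = (\<lambda>h. (w1 \<circ> h0) \<circ> h) ` young_sub n r" using E2 by simp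
    also have "\<dots> = C1" by (simp only: coset_shift[OF h0] E1)
    finally show "C1 = C2" by simp
  qed
  show "(\<lambda>C. map (SOME w. w \<in> C) [1..<r+1]) ` cosets_Sn n r = Inj r {1..n}"
  proof
    show "(\<lambda>C. map (SOME w. w \<in> C) [1..<r+1]) ` cosets_Sn n r \<subseteq> Inj r {1..n}"
    proof
      fix s assume "s \<in> (\<lambda>C. map (SOME w. w \<in> C) [1..<r+1]) ` cosets_Sn n r"
      then obtain C where C: "C \<in> cosets_Sn n r" and s: "s = map (SOME w. w \<in> C) [1..<r+1]" by blast
      have p: "(SOME w. w \<in> C) permutes {1..n}" by (rule coset_rep(1)[OF C])
      have "distinct s" unfolding s
        by (simp add: distinct_map permutes_inj_on[OF p])
      moreover have "set s \<subseteq> {1..n}"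
      proof
        fix z assume "z \<in> set s"
        then obtain i where i: "i \<in> set [1..<r+1]" and z: "z = (SOME w. w \<in> C) i" unfolding s by auto
        have "i \<in> {1..n}" using i rn by auto
        then show "z \<in> {1..n}" unfolding z by (simp only: permutes_in_image[OF p])
      qed
      ultimately show "s \<in> Inj r {1..n}" by (simp add: Inj_def s)
    qed
  next
    show "Inj r {1..n} \<subseteq> (\<lambda>C. map (SOME w. w \<in> C) [1..<r+1]) ` cosets_Sn n r"
    proof
      fix s assume "s \<in> Inj r {1..n}"
      then obtain w where w: "w permutes {1..n}" and ws: "map w [1..<r+1] = s"
        using perm_extend[OF _ _ _ rn] by (auto simp: Inj_def)
      define C where "C = (\<lambda>h. w \<circ> h) ` young_sub n r"
      have "C \<in> cosets_Sn n r" using w by (auto simp: cosets_Sn_def C_def)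
      moreover have "map (SOME w. w \<in> C) [1..<r+1] = s" using map_rep_coset[OF C_def] ws by (rule trans)
      ultimately show "s \<in> (\<lambda>C. map (SOME w. w \<in> C) [1..<r+1]) ` cosets_Sn n r"
        by (intro image_eqI[where x=C]) simp_all
    qed
  qed
qed

lemma HP_HPS:
  fixes x b :: "nat \<Rightarrow> 'a::field"
  assumes rn: "r \<le> n"
  shows "HP n r lam x t b = HPS t x b r lam {1..n}"
proof -
  have "HP n r lam x t b = (\<Sum>C\<in>cosets_Sn n r. TT t x b lam {1..n} (map (SOME w. w \<in> C) [1..<r+1]))"
    unfolding HP_def by (rule sum.cong[OF refl]) (simp add: summand_TT[OF coset_rep(1) rn])
  also have "\<dots> = (\<Sum>s\<in>Inj r {1..n}. TT t x b lam {1..n} s)"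
    by (rule sum.reindex_bij_betw[OF cosets_bij[OF rn]])
  also have "\<dots> = HPS t x b r lam {1..n}" by (simp add: HPS_Inj)
  finally show ?thesis .
qed

theorem mainTheorem13:
  fixes n r :: nat and lam :: "nat \<Rightarrow> nat"
    and x b :: "nat \<Rightarrow> 'a::field" and t :: 'a
  assumes "r \<le> n"
    and "\<forall>i\<in>{1..r}. 0 < lam i"
    and "\<forall>i\<in>{1..r}. \<forall>j\<in>{1..r}. i \<le> j \<longrightarrow> lam j \<le> lam i"
    and "inj_on x {1..n}"
    and "t \<noteq> 1"
  shows "HP n r lam x t b =
         HP_genser n r lam x t b (\<lambda>l. if l \<in> {1..r} then - int (lam l) else 0)"
proof -
  have tg: "(\<lambda>l. if l \<in> {1..r} then - int (lam l) else 0) = tgt 0 r lam"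
    by (rule ext) (auto simp: tgt_def)
  have "HP_genser n r lam x t b (\<lambda>l. if l \<in> {1..r} then - int (lam l) else 0)
      = (1 / (1 - t) ^ r) * rep (Wg t x b 0 {1..n} lam r) (tgt 0 r lam)"
    by (subst tg) (rule genser_eq)
  also have "\<dots> = (1 / (1 - t) ^ r) * ((1 - t) ^ r * HPS t x b r lam {1..n})"
    using main_ind[of "{1..n}" x r t b 0 lam] assms(1,4) by simp
  also have "\<dots> = HPS t x b r lam {1..n}" using assms(5) by simp
  finally show ?thesis using HP_HPS[OF assms(1)] by simp
qed


end
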